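(* Let $\eta:[0,1]\times[0,1]\to\mathbf R$ be a function such that $\eta(\cdot,s)$ is continuous for every $s\in[0,1]$ and, for every $\varepsilon>0$, $\eta(\cdot,s)$ is Lipschitz on $[\varepsilon,1]$ uniformly in $s\in[0,1]$. Assume also that $\eta(t,\cdot)$ is non-decreasing for every $t\in[0,1]$. Define $$r(t):=\liminf_{h\to0^+}\frac{\eta(t,t)-\eta(t-h,t)}{h}+\liminf_{h\to0^+}\frac{\eta(t,t+h)-\eta(t,t)}{h}$$ and $\delta(t):=\eta(t,t)$. Then $\delta\in L^1(0,1)$ and $D\delta\ge r(t)\,dt$ in the sense of distributions on $(0,1)$. Moreover, $$\delta(1)-\delta(0)\ge\int_0^1r(\xi)\,d\xi.$$
   Context: $D\delta$ denotes the distributional derivative of $\delta$ on $(0,1)$; $D\delta\ge r\,dt$ means $-\int_0^1\delta\,\phi'\,dt\ge\int_0^1 r\,\phi\,dt$ for all non-negative $\phi\in C^\infty_c(0,1)$. *)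

theory Defs
  imports "HOL-Analysis.Analysis"
begin

definition test_fun01 :: "(real \<Rightarrow> real) \<Rightarrow> bool" where
  "test_fun01 \<phi> \<longleftrightarrow>
     (\<forall>k::nat. \<forall>x. ((deriv ^^ k) \<phi> has_real_derivative (deriv ^^ (Suc k)) \<phi> x) (at x)) \<and>
     (\<exists>a b. 0 < a \<and> a \<le> b \<and> b < 1 \<and> (\<forall>x. x \<notin> {a..b} \<longrightarrow> \<phi> x = 0))"

definition pos_int :: "real set \<Rightarrow> (real \<Rightarrow> ereal) \<Rightarrow> ennreal" where
  "pos_int S f = (\<integral>\<^sup>+ x\<in>S. e2ennreal (f x) \<partial>lebesgue)"

definition neg_int :: "real set \<Rightarrow> (real \<Rightarrow> ereal) \<Rightarrow> ennreal" where
  "neg_int S f = (\<integral>\<^sup>+ x\<in>S. e2ennreal (- f x) \<partial>lebesgue)"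

text \<open>"\<integral>_S f \<le> c" for the extended Lebesgue integral int f_pos - int f_neg, written without
  subtraction: int f_pos <= c + int f_neg. (Vacuous only when the integral is undefined, \<infinity> - \<infinity>.)\<close>
definition ext_integral_le :: "real set \<Rightarrow> (real \<Rightarrow> ereal) \<Rightarrow> real \<Rightarrow> bool" where
  "ext_integral_le S f c \<longleftrightarrow> enn2ereal (pos_int S f) \<le> ereal c + enn2ereal (neg_int S f)"

end

theory Submission
  imports Defs
begin


lemma meas_monolip:
  fixes g :: "real \<Rightarrow> real" and S :: "real set"
  assumes S: "S \<in> sets borel"
    and h: "\<And>x y. x \<in> S \<Longrightarrow> y \<in> S \<Longrightarrow> x \<le> y \<Longrightarrow> g x \<le> g y + L * (y - x)"
  shows "(\<lambda>x. if x \<in> S then g x else 0) \<in> borel_measurable borel"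
proof -
  have "mono_on S (\<lambda>x. g x + L * x)"
    by (rule mono_onI) (use h in \<open>fastforce simp: algebra_simps\<close>)
  then have "(\<lambda>x. g x + L * x) \<in> borel_measurable (restrict_space borel S)"
    by (rule borel_measurable_mono_on_fnc)
  moreover have "(\<lambda>x. L * x) \<in> borel_measurable (restrict_space borel S)"
    by (intro measurable_restrict_space1) simp
  ultimately have "(\<lambda>x. (g x + L * x) - L * x) \<in> borel_measurable (restrict_space borel S)"
    by (rule borel_measurable_diff)
  then have "g \<in> borel_measurable (restrict_space borel S)" by simp
  then show "(\<lambda>x. if x \<in> S then g x else 0) \<in> borel_measurable borel"
    using measurable_restrict_space_iff[of S borel 0 borel g] S by simp
qed

lemma borel_to_lebesgue: "f \<in> borel_measurable borel \<Longrightarrow> f \<in> borel_measurable (lebesgue :: real measure)"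
  by (intro measurable_completion) (simp add: measurable_lborel1)



lemma INF_rat_eq:
  fixes f :: "real \<Rightarrow> real"
  assumes e: "0 < e" "e \<le> c"
    and approx: "\<And>h d. 0 < h \<Longrightarrow> h < c \<Longrightarrow> 0 < d \<Longrightarrow> eventually (\<lambda>q. f q < f h + d) (at_left h)"
  shows "(INF q\<in>\<rat>\<inter>{0<..<e}. ereal (f q)) = (INF q\<in>{0<..<e}. ereal (f q))"
proof (rule antisym)
  show "(INF q\<in>{0<..<e}. ereal (f q)) \<le> (INF q\<in>\<rat>\<inter>{0<..<e}. ereal (f q))"
    by (rule INF_superset_mono) auto
  show "(INF q\<in>\<rat>\<inter>{0<..<e}. ereal (f q)) \<le> (INF q\<in>{0<..<e}. ereal (f q))"
  proof (rule INF_greatest)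
    fix h assume h: "h \<in> {0<..<e}"
    show "(INF q\<in>\<rat>\<inter>{0<..<e}. ereal (f q)) \<le> ereal (f h)"
    proof (rule ereal_le_epsilon2)
      fix d :: real assume d: "0 < d"
      have "eventually (\<lambda>q. f q < f h + d) (at_left h)"
        using approx[of h d] h e d by auto
      moreover have "eventually (\<lambda>q. q \<in> {0<..<h}) (at_left h)"
        using h by (intro eventually_at_left_real) auto
      ultimately have "eventually (\<lambda>q. f q < f h + d \<and> q \<in> {0<..<h}) (at_left h)"
        by (rule eventually_conj)
      then obtain b where b: "b < h" "\<And>y. b < y \<Longrightarrow> y < h \<Longrightarrow> f y < f h + d \<and> y \<in> {0<..<h}"
        unfolding eventually_at_left_field by blast
      obtain q where q: "q \<in> \<rat>" "b < q" "q < h"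
        using Rats_dense_in_real[OF b(1)] by blast
      have qq: "f q < f h + d" "q \<in> {0<..<h}" using b(2)[OF q(2,3)] by auto
      then have "q \<in> \<rat>\<inter>{0<..<e}" using q h by auto
      then have "(INF q\<in>\<rat>\<inter>{0<..<e}. ereal (f q)) \<le> ereal (f q)"
        by (rule INF_lower)
      also have "\<dots> \<le> ereal (f h) + ereal d" using qq by simp
      finally show "(INF q\<in>\<rat>\<inter>{0<..<e}. ereal (f q)) \<le> ereal (f h) + ereal d" .
    qed
  qed
qed

lemma Liminf_at_right0_INF:
  fixes f :: "real \<Rightarrow> ereal"
  shows "Liminf (at_right 0) f = (SUP n\<in>{N..}. INF q\<in>{0<..<1/(real n+1)}. f q)"
proof -
  have set: "{0<..} \<inter> ball 0 e - {0} = {0<..<e}" for e :: real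
    by (auto simp: dist_real_def)
  have "Liminf (at_right 0) f = (SUP e\<in>{0<..}. INF y\<in>{0<..<e}. f y)"
    unfolding Liminf_within set ..
  also have "\<dots> = (SUP n\<in>{N..}. INF q\<in>{0<..<1/(real n+1)}. f q)"
  proof (rule antisym)
    show "(SUP e\<in>{0<..}. INF y\<in>{0<..<e}. f y) \<le> (SUP n\<in>{N..}. INF q\<in>{0<..<1/(real n+1)}. f q)"
    proof (rule SUP_least)
      fix e :: real assume "e \<in> {0<..}"
      then have e: "0 < e" by simp
      obtain n :: nat where n: "1 / e < real n" using reals_Archimedean2 by blast
      define m where "m = max n N"
      have "real n \<le> real m" by (simp add: m_def)
      then have "1/e < real m + 1" using n by linarith
      then have "1 < e * (real m + 1)" using e by (simp add: field_simps)
      then have "1/(real m + 1) < e" by (simp add: field_simps)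
      then have "(INF y\<in>{0<..<e}. f y) \<le> (INF q\<in>{0<..<1/(real m+1)}. f q)"
        by (intro INF_superset_mono) auto
      also have "\<dots> \<le> (SUP n\<in>{N..}. INF q\<in>{0<..<1/(real n+1)}. f q)"
        by (rule SUP_upper) (simp add: m_def)
      finally show "(INF y\<in>{0<..<e}. f y) \<le> (SUP n\<in>{N..}. INF q\<in>{0<..<1/(real n+1)}. f q)" .
    qed
    show "(SUP n\<in>{N..}. INF q\<in>{0<..<1/(real n+1)}. f q) \<le> (SUP e\<in>{0<..}. INF y\<in>{0<..<e}. f y)"
      by (rule SUP_least, rule SUP_upper) auto
  qed
  finally show ?thesis .
qed

lemma Liminf_rat:
  fixes f :: "real \<Rightarrow> real"
  assumes c: "1/(real N + 1) \<le> c"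
    and approx: "\<And>h d. 0 < h \<Longrightarrow> h < c \<Longrightarrow> 0 < d \<Longrightarrow> eventually (\<lambda>q. f q < f h + d) (at_left h)"
  shows "Liminf (at_right 0) (\<lambda>h. ereal (f h)) = (SUP n\<in>{N..}. INF q\<in>\<rat>\<inter>{0<..<1/(real n+1)}. ereal (f q))"
proof -
  have "Liminf (at_right 0) (\<lambda>h. ereal (f h)) = (SUP n\<in>{N..}. INF q\<in>{0<..<1/(real n+1)}. ereal (f q))"
    by (rule Liminf_at_right0_INF)
  also have "\<dots> = (SUP n\<in>{N..}. INF q\<in>\<rat>\<inter>{0<..<1/(real n+1)}. ereal (f q))"
  proof (rule SUP_cong[OF refl])
    fix n assume "n \<in> {N..}"
    then have "1/(real n + 1) \<le> 1/(real N + 1)" by (simp add: frac_le)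
    then show "(INF q\<in>{0<..<1/(real n+1)}. ereal (f q)) = (INF q\<in>\<rat>\<inter>{0<..<1/(real n+1)}. ereal (f q))"
      using c by (intro INF_rat_eq[symmetric] approx) auto
  qed
  finally show ?thesis .
qed



locale diag =
  fixes \<eta> :: "real \<Rightarrow> real \<Rightarrow> real"
  assumes cont: "\<forall>s\<in>{0..1}. continuous_on {0..1} (\<lambda>t. \<eta> t s)"
    and lip: "\<forall>\<epsilon>>0. \<exists>L. \<forall>s\<in>{0..1}. L-lipschitz_on {\<epsilon>..1} (\<lambda>t. \<eta> t s)"
    and mono: "\<forall>t\<in>{0..1}. mono_on {0..1} (\<lambda>s. \<eta> t s)"
begin

lemma lipE:
  assumes "\<epsilon> > 0"
  obtains L where "L \<ge> 0"
    "\<And>s t t'. s \<in> {0..1} \<Longrightarrow> t \<in> {\<epsilon>..1} \<Longrightarrow> t' \<in> {\<epsilon>..1} \<Longrightarrow> \<bar>\<eta> t s - \<eta> t' s\<bar> \<le> L * \<bar>t - t'\<bar>"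
proof -
  obtain L where L: "\<forall>s\<in>{0..1}. L-lipschitz_on {\<epsilon>..1} (\<lambda>t. \<eta> t s)"
    using lip assms by blast
  have "L \<ge> 0" using L lipschitz_on_nonneg[of L "{\<epsilon>..1}" "\<lambda>t. \<eta> t 0"] by auto
  moreover have "\<bar>\<eta> t s - \<eta> t' s\<bar> \<le> L * \<bar>t - t'\<bar>"
    if "s \<in> {0..1}" "t \<in> {\<epsilon>..1}" "t' \<in> {\<epsilon>..1}" for s t t'
    using lipschitz_onD[of L "{\<epsilon>..1}" "\<lambda>t. \<eta> t s" t t'] L that by (auto simp: dist_real_def)
  ultimately show ?thesis using that by blast
qed

lemma monoD:
  "t \<in> {0..1} \<Longrightarrow> s \<in> {0..1} \<Longrightarrow> s' \<in> {0..1} \<Longrightarrow> s \<le> s' \<Longrightarrow> \<eta> t s \<le> \<eta> t s'"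
  using mono by (auto simp: mono_on_def)

lemma meas_diag_borel:
  assumes "\<epsilon> > 0" "S \<in> sets borel"
    and "\<And>t. t \<in> S \<Longrightarrow> t + c1 \<in> {\<epsilon>..1} \<and> t + c2 \<in> {0..1}"
  shows "(\<lambda>x. if x \<in> S then \<eta> (x + c1) (x + c2) else 0) \<in> borel_measurable borel"
proof -
  obtain L where L: "L \<ge> 0"
    "\<And>s t t'. s \<in> {0..1} \<Longrightarrow> t \<in> {\<epsilon>..1} \<Longrightarrow> t' \<in> {\<epsilon>..1} \<Longrightarrow> \<bar>\<eta> t s - \<eta> t' s\<bar> \<le> L * \<bar>t - t'\<bar>"
    using lipE[OF assms(1)] by blast
  show ?thesis
  proof (rule meas_monolip[OF assms(2), of _ L])
    fix x y assume xy: "x \<in> S" "y \<in> S" "x \<le> y"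
    have "\<eta> (x + c1) (x + c2) \<le> \<eta> (y + c1) (x + c2) + L * (y - x)"
      using L(2)[of "x + c2" "x + c1" "y + c1"] assms(3)[OF xy(1)] assms(3)[OF xy(2)] xy(3) by auto
    also have "\<eta> (y + c1) (x + c2) \<le> \<eta> (y + c1) (y + c2)"
      using monoD[of "y + c1" "x + c2" "y + c2"] assms(3)[OF xy(1)] assms(3)[OF xy(2)] xy(3) assms(1) by auto
    finally show "\<eta> (x + c1) (x + c2) \<le> \<eta> (y + c1) (y + c2) + L * (y - x)" by simp
  qed
qed

lemma meas_diag:
  assumes "\<epsilon> > 0" "S \<in> sets borel"
    and "\<And>t. t \<in> S \<Longrightarrow> t + c1 \<in> {\<epsilon>..1} \<and> t + c2 \<in> {0..1}"
  shows "(\<lambda>t. \<eta> (t + c1) (t + c2)) \<in> borel_measurable (restrict_space lebesgue S)"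
proof -
  have "(\<lambda>x. if x \<in> S then \<eta> (x + c1) (x + c2) else 0) \<in> borel_measurable lebesgue"
    using meas_diag_borel[OF assms] by (rule borel_to_lebesgue)
  moreover have "S \<inter> space lebesgue \<in> sets lebesgue"
    using assms(2) by simp
  ultimately show ?thesis
    using measurable_restrict_space_iff[of S lebesgue 0 borel "\<lambda>t. \<eta> (t + c1) (t + c2)"] by simp
qed

definition "Xq t h = (\<eta> t t - \<eta> (t - h) t) / h"
definition "Yq t h = (\<eta> t (t + h) - \<eta> t t) / h"
definition "AA t = Liminf (at_right 0) (\<lambda>h. ereal (Xq t h))"
definition "BB t = Liminf (at_right 0) (\<lambda>h. ereal (Yq t h))"

lemma approx_X:
  assumes t: "t \<in> {0<..<1}" and h: "0 < h" "h < t" and d: "0 < d"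
  shows "eventually (\<lambda>q. Xq t q < Xq t h + d) (at_left h)"
proof -
  have "continuous_on {0..1} (\<lambda>x. \<eta> x t)" using cont t by auto
  moreover have "t - h \<in> interior {0..1::real}" using t h by auto
  ultimately have "isCont (\<lambda>x. \<eta> x t) (t - h)" by (rule continuous_on_interior)
  then have "((\<lambda>q. \<eta> (t - q) t) \<longlongrightarrow> \<eta> (t - h) t) (at h)"
    by (rule isCont_tendsto_compose) (intro tendsto_intros)
  then have "((\<lambda>q. (\<eta> t t - \<eta> (t - q) t) / q) \<longlongrightarrow> (\<eta> t t - \<eta> (t - h) t) / h) (at h)"
    using h by (intro tendsto_intros) auto
  then have "((\<lambda>q. Xq t q) \<longlongrightarrow> Xq t h) (at_left h)"
    unfolding Xq_def by (rule filterlim_mono) (auto simp: at_le)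
  then show ?thesis using d by (intro order_tendstoD(2)) auto
qed

lemma approx_Y:
  assumes t: "t \<in> {0<..<1}" and h: "0 < h" "h < 1 - t" and d: "0 < d"
  shows "eventually (\<lambda>q. Yq t q < Yq t h + d) (at_left h)"
proof -
  have "((\<lambda>q. (\<eta> t (t + h) - \<eta> t t) / q) \<longlongrightarrow> (\<eta> t (t + h) - \<eta> t t) / h) (at h)"
    using h by (intro tendsto_intros) auto
  then have "((\<lambda>q. (\<eta> t (t + h) - \<eta> t t) / q) \<longlongrightarrow> Yq t h) (at_left h)"
    unfolding Yq_def by (rule filterlim_mono) (auto simp: at_le)
  then have "eventually (\<lambda>q. (\<eta> t (t + h) - \<eta> t t) / q < Yq t h + d) (at_left h)"
    using d by (intro order_tendstoD(2)) auto
  moreover have "eventually (\<lambda>q. q \<in> {0<..<h}) (at_left h)"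
    using h by (intro eventually_at_left_real) auto
  ultimately show ?thesis
  proof eventually_elim
    case (elim q)
    have "\<eta> t (t + q) \<le> \<eta> t (t + h)"
      using elim(2) t h by (intro monoD) auto
    then have "Yq t q \<le> (\<eta> t (t + h) - \<eta> t t) / q"
      unfolding Yq_def using elim(2) by (intro divide_right_mono) auto
    then show ?case using elim(1) by linarith
  qed
qed

end


context diag begin

lemma meas_AB:
  assumes ab: "0 < a" "a < b" "b < 1"
  shows "AA \<in> borel_measurable (restrict_space lebesgue {a<..<b})"
    and "BB \<in> borel_measurable (restrict_space lebesgue {a<..<b})"
proof -
  let ?M = "restrict_space lebesgue {a<..<b}"
  have m0: "0 < min (a/2) (1-b)" using ab by auto
  obtain n :: nat where n: "n > 0" "inverse (real n) < min (a/2) (1-b)"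
    using ex_inverse_of_nat_less[OF m0] by blast
  define N where "N = n - 1"
  have N: "1/(real N + 1) \<le> a/2" "1/(real N + 1) \<le> 1 - b"
    using n by (auto simp: N_def of_nat_diff inverse_eq_divide)
  have cq: "countable (\<rat> \<inter> {0<..<1/(real m+1)})" for m :: nat
    by (intro countable_Int1 countable_rat)
  have qsmall: "q < 1/(real N + 1)" if "m \<in> {N..}" "q \<in> \<rat> \<inter> {0<..<1/(real m+1)}" for m q
  proof -
    have "1/(real m + 1) \<le> 1/(real N + 1)" using that(1) by (simp add: frac_le)
    then show ?thesis using that(2) by auto
  qed
  have mdiag: "(\<lambda>t. \<eta> t t) \<in> borel_measurable ?M"
    using meas_diag[of a "{a<..<b}" 0 0] ab by auto
  show "AA \<in> borel_measurable ?M"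
  proof -
    have eq: "AA t = (SUP m\<in>{N..}. INF q\<in>\<rat>\<inter>{0<..<1/(real m+1)}. ereal (Xq t q))"
      if "t \<in> space ?M" for t
    proof -
      have t: "t \<in> {a<..<b}" using that by simp
      show ?thesis unfolding AA_def
        by (rule Liminf_rat[of N t]) (use N t ab in \<open>auto intro: approx_X\<close>)
    qed
    have "(\<lambda>t. SUP m\<in>{N..}. INF q\<in>\<rat>\<inter>{0<..<1/(real m+1)}. ereal (Xq t q)) \<in> borel_measurable ?M"
    proof (intro borel_measurable_SUP borel_measurable_INF cq)
      fix m q assume mq: "m \<in> {N..}" "q \<in> \<rat> \<inter> {0<..<1/(real m+1)}"
      have q: "0 < q" "q < a/2" using qsmall[OF mq] mq N by auto
      have "(\<lambda>t. \<eta> (t + - q) (t + 0)) \<in> borel_measurable ?M"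
        using q ab by (intro meas_diag[of "a/2"]) auto
      then have "(\<lambda>t. \<eta> (t - q) t) \<in> borel_measurable ?M" by simp
      then show "(\<lambda>t. ereal (Xq t q)) \<in> borel_measurable ?M"
        unfolding Xq_def using mdiag
        by (intro borel_measurable_ereal borel_measurable_divide borel_measurable_diff) auto
    qed auto
    moreover have "AA \<in> borel_measurable ?M \<longleftrightarrow> ?this"
      by (rule measurable_cong) (rule eq)
    ultimately show ?thesis by simp
  qed
  show "BB \<in> borel_measurable ?M"
  proof -
    have eq: "BB t = (SUP m\<in>{N..}. INF q\<in>\<rat>\<inter>{0<..<1/(real m+1)}. ereal (Yq t q))"
      if "t \<in> space ?M" for t
    proof -
      have t: "t \<in> {a<..<b}" using that by simp
      show ?thesis unfolding BB_def
        by (rule Liminf_rat[of N "1 - t"]) (use N t ab in \<open>auto intro: approx_Y\<close>)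
    qed
    have "(\<lambda>t. SUP m\<in>{N..}. INF q\<in>\<rat>\<inter>{0<..<1/(real m+1)}. ereal (Yq t q)) \<in> borel_measurable ?M"
    proof (intro borel_measurable_SUP borel_measurable_INF cq)
      fix m q assume mq: "m \<in> {N..}" "q \<in> \<rat> \<inter> {0<..<1/(real m+1)}"
      have q: "0 < q" "q < 1 - b" using qsmall[OF mq] mq N by auto
      have "(\<lambda>t. \<eta> (t + 0) (t + q)) \<in> borel_measurable ?M"
        using q ab by (intro meas_diag[of "a"]) auto
      then have "(\<lambda>t. \<eta> t (t + q)) \<in> borel_measurable ?M" by simp
      then show "(\<lambda>t. ereal (Yq t q)) \<in> borel_measurable ?M"
        unfolding Yq_def using mdiag
        by (intro borel_measurable_ereal borel_measurable_divide borel_measurable_diff) auto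
    qed auto
    moreover have "BB \<in> borel_measurable ?M \<longleftrightarrow> ?this"
      by (rule measurable_cong) (rule eq)
    ultimately show ?thesis by simp
  qed
qed

lemma meas_r: "(\<lambda>t. AA t + BB t) \<in> borel_measurable (restrict_space lebesgue {0<..<1})"
proof (rule measurable_piecewise_restrict[of "range (\<lambda>k::nat. {1/(real k+3)<..<1-1/(real k+3)})"])
  show "countable (range (\<lambda>k::nat. {1/(real k+3)<..<1-1/(real k+3)}))" by simp
next
  fix \<Omega> assume "\<Omega> \<in> range (\<lambda>k::nat. {1/(real k+3)<..<1-1/(real k+3)})"
  then obtain k :: nat where k: "\<Omega> = {1/(real k+3)<..<1-1/(real k+3)}" by blast
  have pos: "0 < 1/(real k+3)" by simp
  have sub: "\<Omega> \<subseteq> {0<..<1}"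
  proof
    fix x assume "x \<in> \<Omega>"
    then have x: "1/(real k+3) < x" "x < 1 - 1/(real k+3)" by (auto simp: k)
    have "0 < x" using pos x by linarith
    moreover have "x < 1" using pos x by linarith
    ultimately show "x \<in> {0<..<1}" by simp
  qed
  then have "\<Omega> \<inter> space (restrict_space lebesgue {0<..<1}) = \<Omega>" by auto
  moreover have "\<Omega> \<in> sets (restrict_space lebesgue {0<..<1})"
    using sub by (subst sets_restrict_space_iff) (auto simp: k)
  ultimately show "\<Omega> \<inter> space (restrict_space lebesgue {0<..<1}) \<in> sets (restrict_space lebesgue {0<..<1})"
    by simp
  have "restrict_space (restrict_space lebesgue {0<..<1}) \<Omega> = restrict_space lebesgue ({0<..<1} \<inter> \<Omega>)"
    by (rule restrict_restrict_space) (auto simp: k)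
  also have "{0<..<1} \<inter> \<Omega> = \<Omega>" using sub by auto
  finally have eqM: "restrict_space (restrict_space lebesgue {0<..<1}) \<Omega> = restrict_space lebesgue \<Omega>" .
  have "0 < 1/(real k+3)" "1/(real k+3) < 1-1/(real k+3)" "1-1/(real k+3) < 1"
    by (auto simp: field_simps)
  note abk = this
  have "AA \<in> borel_measurable (restrict_space lebesgue \<Omega>)"
    unfolding k using abk by (rule meas_AB(1))
  moreover have "BB \<in> borel_measurable (restrict_space lebesgue \<Omega>)"
    unfolding k using abk by (rule meas_AB(2))
  ultimately
  show "(\<lambda>t. AA t + BB t) \<in> borel_measurable (restrict_space (restrict_space lebesgue {0<..<1}) \<Omega>)"
    unfolding eqM by (intro borel_measurable_ereal_add)
next
  show "space (restrict_space lebesgue {0<..<1}) \<subseteq> \<Union> (range (\<lambda>k::nat. {1/(real k+3)<..<1-1/(real k+3)}))"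
  proof
    fix t :: real assume "t \<in> space (restrict_space lebesgue {0<..<1})"
    then have t: "0 < t" "t < 1" by auto
    obtain n :: nat where n: "n > 0" "inverse (real n) < min t (1-t)"
      using ex_inverse_of_nat_less[of "min t (1-t)"] t by auto
    have "1/(real n + 3) \<le> inverse (real n)" using n by (simp add: field_simps)
    then have "t \<in> {1/(real n+3)<..<1-1/(real n+3)}" using n by auto
    then show "t \<in> \<Union> (range (\<lambda>k::nat. {1/(real k+3)<..<1-1/(real k+3)}))" by blast
  qed
qed

end


lemma liminf_seq:
  fixes f :: "real \<Rightarrow> ereal"
  assumes "filterlim g (at_right 0) sequentially"
  shows "Liminf (at_right 0) f \<le> liminf (\<lambda>n. f (g n))"
proof (subst le_Liminf_iff, intro allI impI)
  fix y assume "y < Liminf (at_right 0) f"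
  then have "eventually (\<lambda>x. y < f x) (at_right 0)"
    using le_Liminf_iff[of "Liminf (at_right 0) f" "at_right 0" f] by auto
  then show "eventually (\<lambda>n. y < f (g n)) sequentially"
    using assms by (rule eventually_compose_filterlim)
qed

lemma pw_liminf:
  fixes S :: ereal and s :: "nat \<Rightarrow> real" and w :: real
  assumes S: "S \<le> liminf (\<lambda>n. ereal (s n))" and w: "0 \<le> w"
  shows "e2ennreal (S * ereal w) \<le> liminf (\<lambda>n. ennreal (s n * w))"
proof (cases "w = 0")
  case True
  then show ?thesis by (simp add: e2ennreal_neg zero_ereal_def[symmetric])
next
  case False
  with w have w: "0 < w" by simp
  show ?thesis
  proof (subst le_Liminf_iff, intro allI impI)
    fix y assume y: "y < e2ennreal (S * ereal w)"
    then have "y < top" using top.not_eq_extremum by fastforce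
    then obtain y0 where y0: "y = ennreal y0" "0 \<le> y0"
      by (cases y rule: ennreal_cases) auto
    have "ereal y0 < S * ereal w"
    proof (cases "S * ereal w")
      case (real x)
      show ?thesis
      proof (cases "x \<le> 0")
        case True
        then have "e2ennreal (S * ereal w) = 0" using real by (simp add: ennreal_eq_0_iff)
        then show ?thesis using y by simp
      next
        case False
        then have "ennreal y0 < ennreal x" using y y0 real by simp
        then have "y0 < x" using y0 by (simp add: ennreal_less_iff)
        then show ?thesis using real by simp
      qed
    next
      case PInf then show ?thesis by (simp only:) simp
    next
      case MInf note MInf = this
      then have "e2ennreal (S * ereal w) = 0" unfolding MInf by (simp add: e2ennreal_neg)
      then show ?thesis using y by simp
    qed
    then have "ereal (y0 / w) < S"
      using w by (cases S) (auto simp: field_simps)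
    then have "ereal (y0 / w) < liminf (\<lambda>n. ereal (s n))" using S by order
    then have "eventually (\<lambda>n. ereal (y0 / w) < ereal (s n)) sequentially"
      using le_Liminf_iff[of "liminf (\<lambda>n. ereal (s n))" sequentially "\<lambda>n. ereal (s n)"] by auto
    then show "eventually (\<lambda>n. y < ennreal (s n * w)) sequentially"
    proof eventually_elim
      case (elim n)
      then have "y0 < s n * w" using w by (simp add: field_simps)
      then show ?case using y0 by (simp add: ennreal_lessI)
    qed
  qed
qed

context diag begin

lemma bndE:
  obtains M where "M \<ge> 0" "\<And>t s. t \<in> {0..1} \<Longrightarrow> s \<in> {0..1} \<Longrightarrow> \<bar>\<eta> t s\<bar> \<le> M"
proof -
  have "bounded ((\<lambda>t. \<eta> t s) ` {0..1})" if "s \<in> {0..1}" for s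
    using cont that by (intro compact_imp_bounded compact_continuous_image) auto
  then obtain M0 M1 where M0: "\<forall>x\<in>(\<lambda>t. \<eta> t 0) ` {0..1}. \<bar>x\<bar> \<le> M0"
    and M1: "\<forall>x\<in>(\<lambda>t. \<eta> t 1) ` {0..1}. \<bar>x\<bar> \<le> M1"
    unfolding bounded_real by (meson atLeastAtMost_iff order_refl zero_le_one)
  have "\<bar>\<eta> t s\<bar> \<le> max M0 M1" if "t \<in> {0..1}" "s \<in> {0..1}" for t s
  proof -
    have "\<eta> t 0 \<le> \<eta> t s" "\<eta> t s \<le> \<eta> t 1" using that by (auto intro: monoD)
    moreover have "\<bar>\<eta> t 0\<bar> \<le> M0" "\<bar>\<eta> t 1\<bar> \<le> M1" using M0 M1 that by auto
    ultimately show ?thesis by linarith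
  qed
  moreover have "0 \<le> max M0 M1" using M0 by force
  ultimately show ?thesis using that by blast
qed

end


context diag begin

lemma core:
  fixes w :: "real \<Rightarrow> real" and a b K W L :: real
  assumes ab: "0 < a" "a < b" "b < 1"
    and wm: "w \<in> borel_measurable borel"
    and w0: "\<And>u. 0 \<le> w u" and wW: "\<And>u. w u \<le> W"
    and wsupp: "\<And>u. u \<notin> {a..b} \<Longrightarrow> w u = 0"
    and L: "L \<ge> 0" "\<And>s t t'. s \<in> {0..1} \<Longrightarrow> t \<in> {a/2..1} \<Longrightarrow> t' \<in> {a/2..1} \<Longrightarrow> \<bar>\<eta> t s - \<eta> t' s\<bar> \<le> L * \<bar>t - t'\<bar>"
    and bound: "\<And>e. 0 < e \<Longrightarrow> \<exists>h0>0. \<forall>h. 0 < h \<longrightarrow> h < h0 \<longrightarrow>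
         (\<exists>T. integrable lebesgue T \<and> (\<forall>v. \<eta> (v - h) v * (w (v - h) - w v) \<le> h * T v)
              \<and> integral\<^sup>L lebesgue T \<le> K + e)"
  shows "(\<integral>\<^sup>+u. e2ennreal ((AA u + BB u + ereal L) * ereal (w u)) \<partial>lebesgue)
           \<le> ennreal (K + L * integral\<^sup>L lebesgue w)"
    and "0 \<le> K + L * integral\<^sup>L lebesgue w"
proof -
  obtain M where M: "M \<ge> 0" "\<And>t s. t \<in> {0..1} \<Longrightarrow> s \<in> {0..1} \<Longrightarrow> \<bar>\<eta> t s\<bar> \<le> M"
    using bndE by blast
  define hmax where "hmax = min (a/2) (1-b)"
  have hmax: "0 < hmax" "hmax \<le> a/2" "hmax \<le> 1 - b" using ab unfolding hmax_def by (auto simp: min_def)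
  define hs where "hs n = hmax / (2 + real n)" for n :: nat
  have hs_pos: "0 < hs n" for n using hmax by (simp add: hs_def)
  have hs_le: "hs n \<le> hmax" for n
    using hmax by (simp add: hs_def divide_le_eq)
  have hs_tend: "hs \<longlonglongrightarrow> 0"
    unfolding hs_def
    by (intro tendsto_divide_0[OF tendsto_const] filterlim_at_top_imp_at_infinity
        filterlim_tendsto_add_at_top[OF tendsto_const filterlim_real_sequentially])
  have hs_lim: "filterlim hs (at_right 0) sequentially"
    using hs_tend hs_pos by (intro tendsto_imp_filterlim_at_right) auto

  define G where "G h u = (if u \<in> {a..b} then (Xq u h + Yq u h + L) * w u else 0)" for h u
  define P where "P h u = (if u \<in> {a..b} then \<eta> u (u + h) * w u else 0)" for h u
  define Q where "Q h u = (if u \<in> {a..b} then \<eta> (u - h) u * w u else 0)" for h u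
  define I where "I h v = \<eta> (v - h) v * (w (v - h) - w v)" for h v

  have hX: "- L \<le> Xq u h" if "u \<in> {a..b}" "0 < h" "h \<le> hmax" for u h
  proof -
    have "\<bar>\<eta> u u - \<eta> (u - h) u\<bar> \<le> L * \<bar>u - (u - h)\<bar>"
      using that ab hmax by (intro L(2)) auto
    then have "- (L * h) \<le> \<eta> u u - \<eta> (u - h) u" using that by auto
    then show ?thesis unfolding Xq_def using that by (simp add: field_simps)
  qed
  have hY: "0 \<le> Yq u h" if "u \<in> {a..b}" "0 < h" "h \<le> hmax" for u h
  proof -
    have "\<eta> u u \<le> \<eta> u (u + h)" using that ab hmax by (intro monoD) auto
    then show ?thesis unfolding Yq_def using that by simp
  qed
  have hG0: "0 \<le> G h u" if "0 < h" "h \<le> hmax" for u h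
    using hX[of u h] hY[of u h] that w0[of u] by (auto simp: G_def)
  have hGeq: "G h u = (P h u - Q h u) / h + L * w u" if "0 < h" for u h
    using that wsupp[of u] by (auto simp: G_def P_def Q_def Xq_def Yq_def field_simps)
  have hPs: "P h (v - h) = \<eta> (v - h) v * w (v - h)" for h v
    using wsupp[of "v - h"] by (auto simp: P_def)
  have hQ: "Q h v = \<eta> (v - h) v * w v" for h v
    using wsupp[of v] by (auto simp: Q_def)
  have hI: "I h v = P h (v - h) - Q h v" for h v
    by (simp add: I_def hPs hQ algebra_simps)

  have mP: "P h \<in> borel_measurable borel" if "0 < h" "h \<le> hmax" for h
  proof -
    have "(\<lambda>x. if x \<in> {a..b} then \<eta> (x + 0) (x + h) else 0) \<in> borel_measurable borel"
      using that ab hmax by (intro meas_diag_borel[of a]) auto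
    then have "(\<lambda>x. (if x \<in> {a..b} then \<eta> (x + 0) (x + h) else 0) * w x) \<in> borel_measurable borel"
      using wm by (rule borel_measurable_times)
    also have "(\<lambda>x. (if x \<in> {a..b} then \<eta> (x + 0) (x + h) else 0) * w x) = P h"
      by (auto simp: P_def fun_eq_iff)
    finally show ?thesis .
  qed
  have mQ: "Q h \<in> borel_measurable borel" if "0 < h" "h \<le> hmax" for h
  proof -
    have "(\<lambda>x. if x \<in> {a..b} then \<eta> (x + - h) (x + 0) else 0) \<in> borel_measurable borel"
      using that ab hmax by (intro meas_diag_borel[of "a/2"]) auto
    then have "(\<lambda>x. (if x \<in> {a..b} then \<eta> (x + - h) (x + 0) else 0) * w x) \<in> borel_measurable borel"
      using wm by (rule borel_measurable_times)
    also have "(\<lambda>x. (if x \<in> {a..b} then \<eta> (x + - h) (x + 0) else 0) * w x) = Q h"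
      by (auto simp: Q_def fun_eq_iff)
    finally show ?thesis .
  qed
  have mG: "G h \<in> borel_measurable borel" if "0 < h" "h \<le> hmax" for h
  proof -
    have "(\<lambda>u. (P h u - Q h u) / h + L * w u) \<in> borel_measurable borel"
      using mP[OF that] mQ[OF that] wm by measurable
    also have "(\<lambda>u. (P h u - Q h u) / h + L * w u) = G h"
      using hGeq[OF that(1)] by auto
    finally show ?thesis .
  qed

  have fin: "emeasure lebesgue {a..b} < \<infinity>" using ab by simp
  have bP: "\<bar>P h u\<bar> \<le> M * W" if "0 < h" "h \<le> hmax" for h u
  proof (cases "u \<in> {a..b}")
    case True
    have "\<bar>\<eta> u (u + h)\<bar> \<le> M" using True that ab hmax by (intro M(2)) auto
    then have "\<bar>\<eta> u (u + h)\<bar> * \<bar>w u\<bar> \<le> M * W"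
      using w0[of u] wW[of u] M(1) by (intro mult_mono) auto
    then show ?thesis using True by (simp add: P_def abs_mult)
  next
    case False then show ?thesis using M(1) w0[of u] wW[of u] by (auto simp: P_def)
  qed
  have bQ: "\<bar>Q h u\<bar> \<le> M * W" if "0 < h" "h \<le> hmax" for h u
  proof (cases "u \<in> {a..b}")
    case True
    have "\<bar>\<eta> (u - h) u\<bar> \<le> M" using True that ab hmax by (intro M(2)) auto
    then have "\<bar>\<eta> (u - h) u\<bar> * \<bar>w u\<bar> \<le> M * W"
      using w0[of u] wW[of u] M(1) by (intro mult_mono) auto
    then show ?thesis using True by (simp add: Q_def abs_mult)
  next
    case False then show ?thesis using M(1) w0[of u] wW[of u] by (auto simp: Q_def)
  qed
  have iP: "integrable lebesgue (P h)" if "0 < h" "h \<le> hmax" for h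
  proof (rule integrableI_bounded_set[where A="{a..b}" and B="M * W"])
    show "P h \<in> borel_measurable lebesgue" using borel_to_lebesgue[OF mP[OF that]] .
    show "AE x in lebesgue. x \<in> {a..b} \<longrightarrow> norm (P h x) \<le> M * W"
      using bP[OF that] by (intro AE_I2) auto
    show "AE x in lebesgue. x \<notin> {a..b} \<longrightarrow> P h x = 0"
      by (intro AE_I2) (auto simp: P_def)
  qed (use fin in auto)
  have iQ: "integrable lebesgue (Q h)" if "0 < h" "h \<le> hmax" for h
  proof (rule integrableI_bounded_set[where A="{a..b}" and B="M * W"])
    show "Q h \<in> borel_measurable lebesgue" using borel_to_lebesgue[OF mQ[OF that]] .
    show "AE x in lebesgue. x \<in> {a..b} \<longrightarrow> norm (Q h x) \<le> M * W"
      using bQ[OF that] by (intro AE_I2) auto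
    show "AE x in lebesgue. x \<notin> {a..b} \<longrightarrow> Q h x = 0"
      by (intro AE_I2) (auto simp: Q_def)
  qed (use fin in auto)
  have iw: "integrable lebesgue w"
  proof (rule integrableI_bounded_set[where A="{a..b}" and B="W"])
    show "w \<in> borel_measurable lebesgue" using borel_to_lebesgue[OF wm] .
    show "AE x in lebesgue. x \<in> {a..b} \<longrightarrow> norm (w x) \<le> W"
      using w0 wW by (intro AE_I2) auto
    show "AE x in lebesgue. x \<notin> {a..b} \<longrightarrow> w x = 0"
      using wsupp by (intro AE_I2) auto
  qed (use fin in auto)
  have iPs: "integrable lebesgue (\<lambda>v. P h (v - h))" if "0 < h" "h \<le> hmax" for h
    using lebesgue_integrable_real_affine_iff[of 1 "P h" "- h"] iP[OF that] by simp
  have intPs: "integral\<^sup>L lebesgue (\<lambda>v. P h (v - h)) = integral\<^sup>L lebesgue (P h)" for h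
    using lebesgue_integral_real_affine[of 1 "P h" "- h"] by simp
  have iI: "integrable lebesgue (I h)" if "0 < h" "h \<le> hmax" for h
    unfolding hI using iPs[OF that] iQ[OF that] by (rule Bochner_Integration.integrable_diff)
  have iG: "integrable lebesgue (G h)" if "0 < h" "h \<le> hmax" for h
  proof -
    have "integrable lebesgue (\<lambda>u. (P h u - Q h u) / h + L * w u)"
      using iP[OF that] iQ[OF that] iw by auto
    also have "(\<lambda>u. (P h u - Q h u) / h + L * w u) = G h"
      using hGeq[OF that(1)] by auto
    finally show ?thesis .
  qed
  have intG: "integral\<^sup>L lebesgue (G h) = integral\<^sup>L lebesgue (I h) / h + L * integral\<^sup>L lebesgue w"
    if "0 < h" "h \<le> hmax" for h
  proof -
    have "integral\<^sup>L lebesgue (G h) = integral\<^sup>L lebesgue (\<lambda>u. (P h u - Q h u) / h + L * w u)"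
      using hGeq[OF that(1)] by (intro Bochner_Integration.integral_cong) auto
    also have "\<dots> = (integral\<^sup>L lebesgue (P h) - integral\<^sup>L lebesgue (Q h)) / h + L * integral\<^sup>L lebesgue w"
      using iP[OF that] iQ[OF that] iw by (simp add: Bochner_Integration.integral_add Bochner_Integration.integral_diff)
    also have "integral\<^sup>L lebesgue (P h) - integral\<^sup>L lebesgue (Q h) = integral\<^sup>L lebesgue (I h)"
      unfolding hI using iPs[OF that] iQ[OF that] intPs[of h]
      by (simp add: Bochner_Integration.integral_diff)
    finally show ?thesis .
  qed
  have nnG: "(\<integral>\<^sup>+u. ennreal (G h u) \<partial>lebesgue) = ennreal (integral\<^sup>L lebesgue (G h))"
    if "0 < h" "h \<le> hmax" for h
    using iG[OF that] hG0[OF that] by (intro nn_integral_eq_integral) auto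
  have Gbound: "\<exists>N. \<forall>n\<ge>N. integral\<^sup>L lebesgue (G (hs n)) \<le> K + e + L * integral\<^sup>L lebesgue w"
    if e: "0 < e" for e
  proof -
    obtain h0 where h0: "h0 > 0" "\<And>h. 0 < h \<Longrightarrow> h < h0 \<Longrightarrow>
         (\<exists>T. integrable lebesgue T \<and> (\<forall>v. I h v \<le> h * T v) \<and> integral\<^sup>L lebesgue T \<le> K + e)"
      using bound[OF e] unfolding I_def by blast
    have "eventually (\<lambda>n. hs n < h0) sequentially"
      using hs_tend h0(1) by (intro order_tendstoD(2)) auto
    then obtain N where N: "\<And>n. n \<ge> N \<Longrightarrow> hs n < h0" unfolding eventually_sequentially by blast
    have "integral\<^sup>L lebesgue (G (hs n)) \<le> K + e + L * integral\<^sup>L lebesgue w" if n: "n \<ge> N" for n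
    proof -
      let ?h = "hs n"
      obtain T where T: "integrable lebesgue T" "\<And>v. I ?h v \<le> ?h * T v" "integral\<^sup>L lebesgue T \<le> K + e"
        using h0(2)[OF hs_pos N[OF n]] by blast
      have "integral\<^sup>L lebesgue (I ?h) \<le> integral\<^sup>L lebesgue (\<lambda>v. ?h * T v)"
        using iI[OF hs_pos hs_le] T by (intro integral_mono) auto
      also have "\<dots> = ?h * integral\<^sup>L lebesgue T" by simp
      also have "\<dots> \<le> ?h * (K + e)" using T(3) hs_pos[of n] by (intro mult_left_mono) auto
      finally have "integral\<^sup>L lebesgue (I ?h) / ?h \<le> K + e"
        using hs_pos[of n] by (simp add: divide_le_eq mult.commute)
      then show ?thesis using intG[OF hs_pos hs_le] by simp
    qed
    then show ?thesis by blast
  qed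

  have pw: "e2ennreal ((AA u + BB u + ereal L) * ereal (w u)) \<le> liminf (\<lambda>n. ennreal (G (hs n) u))" for u
  proof (cases "u \<in> {a..b}")
    case False
    then show ?thesis using wsupp[of u] by (simp add: e2ennreal_neg zero_ereal_def[symmetric])
  next
    case True
    have ev1: "eventually (\<lambda>h. h \<in> {0<..<hmax}) (at_right 0)"
      using hmax by (intro eventually_at_right_real) auto
    have evX: "eventually (\<lambda>h. 0 \<le> ereal (Xq u h) + ereal L) (at_right 0)"
    proof (rule eventually_mono[OF ev1])
      fix h assume "h \<in> {0<..<hmax}"
      then have "- L \<le> Xq u h" using hX[OF True, of h] by auto
      then show "0 \<le> ereal (Xq u h) + ereal L" by simp
    qed
    have evY: "eventually (\<lambda>h. 0 \<le> ereal (Yq u h)) (at_right 0)"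
      using ev1 by eventually_elim (use hY[OF True] in auto)
    have e1: "AA u + ereal L = Liminf (at_right 0) (\<lambda>h. ereal (Xq u h) + ereal L)"
      unfolding AA_def by (rule Liminf_add_ereal_right[symmetric]) auto
    have "AA u + BB u + ereal L = (AA u + ereal L) + BB u"
      by (metis add.assoc add.commute)
    also have "\<dots> = Liminf (at_right 0) (\<lambda>h. ereal (Xq u h) + ereal L)
        + Liminf (at_right 0) (\<lambda>h. ereal (Yq u h))"
      unfolding e1 BB_def ..
    also have "\<dots> \<le> Liminf (at_right 0) (\<lambda>h. ereal (Xq u h) + ereal L + ereal (Yq u h))"
      by (rule Liminf_add_le[OF _ evX evY]) auto
    also have "\<dots> \<le> liminf (\<lambda>n. ereal (Xq u (hs n)) + ereal L + ereal (Yq u (hs n)))"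
      by (rule liminf_seq[OF hs_lim])
    also have "\<dots> = liminf (\<lambda>n. ereal (Xq u (hs n) + Yq u (hs n) + L))"
      by (simp add: ac_simps)
    finally have "e2ennreal ((AA u + BB u + ereal L) * ereal (w u))
        \<le> liminf (\<lambda>n. ennreal ((Xq u (hs n) + Yq u (hs n) + L) * w u))"
      using w0[of u] by (rule pw_liminf)
    then show ?thesis using True by (simp add: G_def)
  qed
  have mGl: "(\<lambda>u. ennreal (G (hs n) u)) \<in> borel_measurable lebesgue" for n
    using borel_to_lebesgue[OF mG[OF hs_pos hs_le]] by measurable
  have fatou: "(\<integral>\<^sup>+u. e2ennreal ((AA u + BB u + ereal L) * ereal (w u)) \<partial>lebesgue)
      \<le> liminf (\<lambda>n. \<integral>\<^sup>+u. ennreal (G (hs n) u) \<partial>lebesgue)"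
  proof -
    have "(\<integral>\<^sup>+u. e2ennreal ((AA u + BB u + ereal L) * ereal (w u)) \<partial>lebesgue)
        \<le> (\<integral>\<^sup>+u. liminf (\<lambda>n. ennreal (G (hs n) u)) \<partial>lebesgue)"
      by (intro nn_integral_mono pw)
    also have "\<dots> \<le> liminf (\<lambda>n. \<integral>\<^sup>+u. ennreal (G (hs n) u) \<partial>lebesgue)"
      by (rule nn_integral_liminf[OF mGl])
    finally show ?thesis .
  qed
  show "0 \<le> K + L * integral\<^sup>L lebesgue w"
  proof (rule ccontr)
    assume "\<not> ?thesis"
    then have e: "0 < - (K + L * integral\<^sup>L lebesgue w) / 2" by simp
    obtain N where "\<forall>n\<ge>N. integral\<^sup>L lebesgue (G (hs n)) \<le> K + - (K + L * integral\<^sup>L lebesgue w) / 2 + L * integral\<^sup>L lebesgue w"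
      using Gbound[OF e] by blast
    then have "integral\<^sup>L lebesgue (G (hs N)) \<le> K + - (K + L * integral\<^sup>L lebesgue w) / 2 + L * integral\<^sup>L lebesgue w"
      by blast
    moreover have "0 \<le> integral\<^sup>L lebesgue (G (hs N))"
      using hG0[OF hs_pos hs_le] by (intro integral_nonneg_AE) auto
    ultimately have "0 \<le> K + - (K + L * integral\<^sup>L lebesgue w) / 2 + L * integral\<^sup>L lebesgue w"
      by linarith
    then have "0 \<le> (K + L * integral\<^sup>L lebesgue w) / 2" by (simp add: field_simps)
    then show False using e by linarith
  qed
  show "(\<integral>\<^sup>+u. e2ennreal ((AA u + BB u + ereal L) * ereal (w u)) \<partial>lebesgue)
           \<le> ennreal (K + L * integral\<^sup>L lebesgue w)"
  proof (rule ennreal_le_epsilon)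
    fix e :: real assume e: "0 < e"
    obtain N where N: "\<forall>n\<ge>N. integral\<^sup>L lebesgue (G (hs n)) \<le> K + e + L * integral\<^sup>L lebesgue w"
      using Gbound[OF e] by blast
    have "liminf (\<lambda>n. \<integral>\<^sup>+u. ennreal (G (hs n) u) \<partial>lebesgue) \<le> ennreal (K + e + L * integral\<^sup>L lebesgue w)"
    proof (rule Liminf_le)
      show "eventually (\<lambda>n. (\<integral>\<^sup>+u. ennreal (G (hs n) u) \<partial>lebesgue) \<le> ennreal (K + e + L * integral\<^sup>L lebesgue w)) sequentially"
        unfolding eventually_sequentially
        using N by (auto simp: nnG[OF hs_pos hs_le] intro!: ennreal_leI)
    qed simp
    also have "\<dots> \<le> ennreal (K + L * integral\<^sup>L lebesgue w) + ennreal e"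
    proof (cases "0 \<le> K + L * integral\<^sup>L lebesgue w")
      case True
      then show ?thesis using e by (simp add: ac_simps ennreal_plus[symmetric] del: ennreal_plus)
    next
      case False
      then have "ennreal (K + e + L * integral\<^sup>L lebesgue w) \<le> ennreal e" by (intro ennreal_leI) auto
      then show ?thesis by (simp add: add_increasing)
    qed
    finally show "(\<integral>\<^sup>+u. e2ennreal ((AA u + BB u + ereal L) * ereal (w u)) \<partial>lebesgue)
        \<le> ennreal (K + L * integral\<^sup>L lebesgue w) + ennreal e"
      using fatou by order
  qed
qed

end


lemma enn_cancel:
  fixes p n :: ennreal and c K :: real
  assumes c: "0 \<le> c" "0 \<le> K + c" and le: "p + ennreal c \<le> ennreal (K + c) + n"
  shows "enn2ereal p \<le> ereal K + enn2ereal n"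
proof (cases "n = top")
  case True then show ?thesis by simp
next
  case False
  then obtain n0 where n0: "n = ennreal n0" "0 \<le> n0" by (cases n rule: ennreal_cases) auto
  have "ennreal (K + c) + n = ennreal (K + c + n0)" using n0 c by simp
  then have le2: "p + ennreal c \<le> ennreal (K + c + n0)" using le by simp
  have "p \<le> p + ennreal c" by (rule add_increasing2) auto
  then have "p \<le> ennreal (K + c + n0)" using le2 by (rule order.trans)
  then have "p < top" using ennreal_less_top by (rule le_less_trans)
  then obtain p0 where p0: "p = ennreal p0" "0 \<le> p0" by (cases p rule: ennreal_cases) auto
  have e: "p + ennreal c = ennreal (p0 + c)" using p0 c by simp
  have "ennreal (p0 + c) \<le> ennreal (K + c + n0)" using le2 unfolding e .
  then have "p0 + c \<le> K + c + n0" by (subst (asm) ennreal_le_iff) (use c n0 in auto)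
  then show ?thesis using p0 n0 by simp
qed

lemma pw_decomp:
  fixes x :: ereal and w L :: real
  assumes w: "0 \<le> w" and L: "0 \<le> L" and xL: "0 < w \<Longrightarrow> - ereal L \<le> x"
  shows "e2ennreal (x * ereal w) + ennreal (L * w)
       = e2ennreal ((x + ereal L) * ereal w) + e2ennreal (- (x * ereal w))"
proof (cases "w = 0")
  case True then show ?thesis by (simp add: zero_ereal_def[symmetric] e2ennreal_neg)
next
  case False
  with w have w: "0 < w" by simp
  have xL': "- ereal L \<le> x" using xL w by blast
  show ?thesis
  proof (cases x)
    case (real y)
    then have y: "- L \<le> y" using xL' by simp
    show ?thesis
    proof (cases "0 \<le> y")
      case True
      then have "0 \<le> y * w" using w by simp
      then show ?thesis using real w L True
        by (simp add: ennreal_neg e2ennreal_neg ennreal_plus[symmetric] distrib_right del: ennreal_plus)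
    next
      case False
      have eq: "L * w = (y + L) * w + (- (y * w))" by (simp add: algebra_simps)
      have "0 \<le> (y + L) * w" "0 \<le> - (y * w)" using y w False by (auto simp: mult_nonpos_nonneg intro: mult_nonneg_nonneg)
      then have "ennreal (L * w) = ennreal ((y + L) * w) + ennreal (- (y * w))"
        unfolding eq by (rule ennreal_plus)
      moreover have "y * w \<le> 0" using w False by (simp add: mult_nonpos_nonneg)
      ultimately show ?thesis using real w L False
        by (simp add: ennreal_neg)
    qed
  next
    case PInf then show ?thesis using w by simp
  next
    case MInf then show ?thesis using xL' by simp
  qed
qed



lemma meas_piece01:
  fixes f :: "real \<Rightarrow> 'b::topological_space"
  assumes f: "\<And>a b. 0 < a \<Longrightarrow> a < b \<Longrightarrow> b < 1 \<Longrightarrow> f \<in> borel_measurable (restrict_space lebesgue {a<..<b})"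
  shows "f \<in> borel_measurable (restrict_space lebesgue {0<..<1})"
proof (rule measurable_piecewise_restrict[of "range (\<lambda>k::nat. {1/(real k+3)<..<1-1/(real k+3)})"])
  show "countable (range (\<lambda>k::nat. {1/(real k+3)<..<1-1/(real k+3)}))" by simp
next
  fix \<Omega> assume "\<Omega> \<in> range (\<lambda>k::nat. {1/(real k+3)<..<1-1/(real k+3)})"
  then obtain k :: nat where k: "\<Omega> = {1/(real k+3)<..<1-1/(real k+3)}" by blast
  have pos: "0 < 1/(real k+3)" by simp
  have sub: "\<Omega> \<subseteq> {0<..<1}"
  proof
    fix x assume "x \<in> \<Omega>"
    then have x: "1/(real k+3) < x" "x < 1 - 1/(real k+3)" by (auto simp: k)
    have "0 < x" using pos x by linarith
    moreover have "x < 1" using pos x by linarith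
    ultimately show "x \<in> {0<..<1}" by simp
  qed
  then have "\<Omega> \<inter> space (restrict_space lebesgue {0<..<1}) = \<Omega>" by auto
  moreover have "\<Omega> \<in> sets (restrict_space lebesgue {0<..<1})"
    using sub by (subst sets_restrict_space_iff) (auto simp: k)
  ultimately show "\<Omega> \<inter> space (restrict_space lebesgue {0<..<1}) \<in> sets (restrict_space lebesgue {0<..<1})"
    by simp
  have "restrict_space (restrict_space lebesgue {0<..<1}) \<Omega> = restrict_space lebesgue ({0<..<1} \<inter> \<Omega>)"
    by (rule restrict_restrict_space) (auto simp: k)
  also have "{0<..<1} \<inter> \<Omega> = \<Omega>" using sub by auto
  finally have eqM: "restrict_space (restrict_space lebesgue {0<..<1}) \<Omega> = restrict_space lebesgue \<Omega>" .
  have "0 < 1/(real k+3)" "1/(real k+3) < 1-1/(real k+3)" "1-1/(real k+3) < 1"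
    by (auto simp: field_simps)
  then have "f \<in> borel_measurable (restrict_space lebesgue \<Omega>)"
    unfolding k by (rule f)
  then show "f \<in> borel_measurable (restrict_space (restrict_space lebesgue {0<..<1}) \<Omega>)"
    unfolding eqM .
next
  show "space (restrict_space lebesgue {0<..<1}) \<subseteq> \<Union> (range (\<lambda>k::nat. {1/(real k+3)<..<1-1/(real k+3)}))"
  proof
    fix t :: real assume "t \<in> space (restrict_space lebesgue {0<..<1})"
    then have t: "0 < t" "t < 1" by auto
    obtain n :: nat where n: "n > 0" "inverse (real n) < min t (1-t)"
      using ex_inverse_of_nat_less[of "min t (1-t)"] t by auto
    have "1/(real n + 3) \<le> inverse (real n)" using n by (simp add: field_simps)
    then have "t \<in> {1/(real n+3)<..<1-1/(real n+3)}" using n by auto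
    then show "t \<in> \<Union> (range (\<lambda>k::nat. {1/(real k+3)<..<1-1/(real k+3)}))" by blast
  qed
qed

lemma restr01_to_global:
  fixes f :: "real \<Rightarrow> real"
  assumes "f \<in> borel_measurable (restrict_space lebesgue {0<..<1})"
  shows "(\<lambda>x. indicator {0<..<1} x * f x) \<in> borel_measurable lebesgue"
proof -
  have "(\<lambda>x. if x \<in> {0<..<1} then f x else 0) \<in> borel_measurable lebesgue"
    using measurable_restrict_space_iff[of "{0<..<1}" lebesgue 0 borel f] assms by simp
  also have "(\<lambda>x. if x \<in> {0<..<1} then f x else 0) = (\<lambda>x. indicator {0<..<1} x * f x)"
    by (auto simp: fun_eq_iff indicator_def)
  finally show ?thesis .
qed

context diag begin

lemma meas_delta: "(\<lambda>t. \<eta> t t) \<in> borel_measurable (restrict_space lebesgue {0<..<1})"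
proof (rule meas_piece01)
  fix a b :: real assume ab: "0 < a" "a < b" "b < 1"
  have "(\<lambda>t. \<eta> (t + 0) (t + 0)) \<in> borel_measurable (restrict_space lebesgue {a<..<b})"
    using ab by (intro meas_diag[of a]) auto
  then show "(\<lambda>t. \<eta> t t) \<in> borel_measurable (restrict_space lebesgue {a<..<b})" by simp
qed

lemma int_delta: "set_integrable lebesgue {0<..<1} (\<lambda>t. \<eta> t t)"
proof -
  obtain M where M: "M \<ge> 0" "\<And>t s. t \<in> {0..1} \<Longrightarrow> s \<in> {0..1} \<Longrightarrow> \<bar>\<eta> t s\<bar> \<le> M"
    using bndE by blast
  show ?thesis
    unfolding set_integrable_def
  proof (rule integrableI_bounded_set[where A="{0<..<1}" and B=M])
    show "(\<lambda>x. indicator {0<..<1} x *\<^sub>R \<eta> x x) \<in> borel_measurable lebesgue"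
      using restr01_to_global[OF meas_delta] by simp
    show "AE x in lebesgue. x \<in> {0<..<1} \<longrightarrow> norm (indicator {0<..<1} x *\<^sub>R \<eta> x x) \<le> M"
      using M by (intro AE_I2) auto
  qed auto
qed

end


context diag begin

lemma decomp:
  fixes w :: "real \<Rightarrow> real" and K L :: real
  assumes wm: "w \<in> borel_measurable borel" and w0: "\<And>u. 0 \<le> w u"
    and wsupp: "\<And>u. u \<notin> {0<..<1} \<Longrightarrow> w u = 0"
    and iw: "integrable lebesgue w" and L: "0 \<le> L"
    and rL: "\<And>u. 0 < w u \<Longrightarrow> - ereal L \<le> AA u + BB u"
    and c1: "(\<integral>\<^sup>+u. e2ennreal ((AA u + BB u + ereal L) * ereal (w u)) \<partial>lebesgue)
           \<le> ennreal (K + L * integral\<^sup>L lebesgue w)"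
    and c2: "0 \<le> K + L * integral\<^sup>L lebesgue w"
  shows "enn2ereal (\<integral>\<^sup>+u. e2ennreal ((AA u + BB u) * ereal (w u)) \<partial>restrict_space lebesgue {0<..<1})
     \<le> ereal K + enn2ereal (\<integral>\<^sup>+u. e2ennreal (- ((AA u + BB u) * ereal (w u))) \<partial>restrict_space lebesgue {0<..<1})"
proof -
  let ?M = "restrict_space lebesgue {0<..<1::real}"
  have sets01: "{0<..<1::real} \<inter> space lebesgue \<in> sets lebesgue" by simp
  have rm: "(\<lambda>u. AA u + BB u) \<in> borel_measurable ?M" by (rule meas_r)
  have wmM: "w \<in> borel_measurable ?M"
    by (intro measurable_restrict_space1 borel_to_lebesgue wm)
  have wmM': "(\<lambda>u. ereal (w u)) \<in> borel_measurable ?M"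
    using wmM by (rule borel_measurable_ereal)
  have m1: "(\<lambda>u. e2ennreal ((AA u + BB u) * ereal (w u))) \<in> borel_measurable ?M"
    using borel_measurable_ereal_times[OF rm wmM'] by (rule measurable_compose) (rule measurable_e2ennreal)
  have m2: "(\<lambda>u. e2ennreal (- ((AA u + BB u) * ereal (w u)))) \<in> borel_measurable ?M"
    using borel_measurable_uminus_ereal[OF borel_measurable_ereal_times[OF rm wmM']]
    by (rule measurable_compose) (rule measurable_e2ennreal)
  have m3: "(\<lambda>u. ennreal (L * w u)) \<in> borel_measurable ?M"
    using wmM by measurable
  have rLm: "(\<lambda>u. AA u + BB u + ereal L) \<in> borel_measurable ?M"
    by (rule borel_measurable_ereal_add[OF rm]) simp
  have m4: "(\<lambda>u. e2ennreal ((AA u + BB u + ereal L) * ereal (w u))) \<in> borel_measurable ?M"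
    using borel_measurable_ereal_times[OF rLm wmM'] by (rule measurable_compose) (rule measurable_e2ennreal)
  have pw: "e2ennreal ((AA u + BB u) * ereal (w u)) + ennreal (L * w u)
      = e2ennreal ((AA u + BB u + ereal L) * ereal (w u)) + e2ennreal (- ((AA u + BB u) * ereal (w u)))" for u
    using w0[of u] L rL[of u] by (rule pw_decomp)
  have "(\<integral>\<^sup>+u. e2ennreal ((AA u + BB u) * ereal (w u)) \<partial>?M) + (\<integral>\<^sup>+u. ennreal (L * w u) \<partial>?M)
      = (\<integral>\<^sup>+u. e2ennreal ((AA u + BB u) * ereal (w u)) + ennreal (L * w u) \<partial>?M)"
    using m1 m3 by (rule nn_integral_add[symmetric])
  also have "\<dots> = (\<integral>\<^sup>+u. e2ennreal ((AA u + BB u + ereal L) * ereal (w u)) + e2ennreal (- ((AA u + BB u) * ereal (w u))) \<partial>?M)"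
    unfolding pw ..
  also have "\<dots> = (\<integral>\<^sup>+u. e2ennreal ((AA u + BB u + ereal L) * ereal (w u)) \<partial>?M) + (\<integral>\<^sup>+u. e2ennreal (- ((AA u + BB u) * ereal (w u))) \<partial>?M)"
    using m4 m2 by (rule nn_integral_add)
  finally have eq: "(\<integral>\<^sup>+u. e2ennreal ((AA u + BB u) * ereal (w u)) \<partial>?M) + (\<integral>\<^sup>+u. ennreal (L * w u) \<partial>?M)
      = (\<integral>\<^sup>+u. e2ennreal ((AA u + BB u + ereal L) * ereal (w u)) \<partial>?M) + (\<integral>\<^sup>+u. e2ennreal (- ((AA u + BB u) * ereal (w u))) \<partial>?M)" .
  have i3: "(\<integral>\<^sup>+u. ennreal (L * w u) \<partial>?M) = ennreal (L * integral\<^sup>L lebesgue w)"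
  proof -
    have "(\<integral>\<^sup>+u. ennreal (L * w u) \<partial>?M) = (\<integral>\<^sup>+u. ennreal (L * w u) * indicator {0<..<1} u \<partial>lebesgue)"
      using sets01 by (rule nn_integral_restrict_space)
    also have "\<dots> = (\<integral>\<^sup>+u. ennreal (L * w u) \<partial>lebesgue)"
      using wsupp by (intro nn_integral_cong) (auto simp: indicator_def)
    also have "\<dots> = ennreal (integral\<^sup>L lebesgue (\<lambda>u. L * w u))"
      using iw w0 L by (intro nn_integral_eq_integral) auto
    finally show ?thesis by simp
  qed
  have i4: "(\<integral>\<^sup>+u. e2ennreal ((AA u + BB u + ereal L) * ereal (w u)) \<partial>?M)
      = (\<integral>\<^sup>+u. e2ennreal ((AA u + BB u + ereal L) * ereal (w u)) \<partial>lebesgue)"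
  proof -
    have "(\<integral>\<^sup>+u. e2ennreal ((AA u + BB u + ereal L) * ereal (w u)) \<partial>?M)
      = (\<integral>\<^sup>+u. e2ennreal ((AA u + BB u + ereal L) * ereal (w u)) * indicator {0<..<1} u \<partial>lebesgue)"
      using sets01 by (rule nn_integral_restrict_space)
    also have "\<dots> = (\<integral>\<^sup>+u. e2ennreal ((AA u + BB u + ereal L) * ereal (w u)) \<partial>lebesgue)"
      using wsupp by (intro nn_integral_cong) (auto simp: indicator_def zero_ereal_def[symmetric] e2ennreal_neg)
    finally show ?thesis .
  qed
  have "(\<integral>\<^sup>+u. e2ennreal ((AA u + BB u) * ereal (w u)) \<partial>?M) + ennreal (L * integral\<^sup>L lebesgue w)
      \<le> ennreal (K + L * integral\<^sup>L lebesgue w) + (\<integral>\<^sup>+u. e2ennreal (- ((AA u + BB u) * ereal (w u))) \<partial>?M)"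
  proof -
    have "(\<integral>\<^sup>+u. e2ennreal ((AA u + BB u) * ereal (w u)) \<partial>?M) + ennreal (L * integral\<^sup>L lebesgue w)
      = (\<integral>\<^sup>+u. e2ennreal ((AA u + BB u + ereal L) * ereal (w u)) \<partial>lebesgue) + (\<integral>\<^sup>+u. e2ennreal (- ((AA u + BB u) * ereal (w u))) \<partial>?M)"
      using eq unfolding i3 i4 .
    also have "\<dots> \<le> ennreal (K + L * integral\<^sup>L lebesgue w) + (\<integral>\<^sup>+u. e2ennreal (- ((AA u + BB u) * ereal (w u))) \<partial>?M)"
      using c1 by (rule add_right_mono)
    finally show ?thesis .
  qed
  moreover have "0 \<le> L * integral\<^sup>L lebesgue w"
    using L w0 by (intro mult_nonneg_nonneg integral_nonneg_AE) auto
  ultimately show ?thesis by (intro enn_cancel[OF _ c2])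
qed

end


context diag begin

lemma AB_lower:
  assumes a: "0 < a" and u: "u \<in> {a..b}" and b: "b < 1"
    and L: "\<And>s t t'. s \<in> {0..1} \<Longrightarrow> t \<in> {a/2..1} \<Longrightarrow> t' \<in> {a/2..1} \<Longrightarrow> \<bar>\<eta> t s - \<eta> t' s\<bar> \<le> L * \<bar>t - t'\<bar>"
  shows "- ereal L \<le> AA u + BB u"
proof -
  define hmax where "hmax = min (a/2) (1-b)"
  have hmax: "0 < hmax" "hmax \<le> a/2" "hmax \<le> 1 - b" using a b u unfolding hmax_def by (auto simp: min_def)
  have ev: "eventually (\<lambda>h. h \<in> {0<..<hmax}) (at_right 0)"
    using hmax by (intro eventually_at_right_real) auto
  have "eventually (\<lambda>h. ereal (- L) \<le> ereal (Xq u h)) (at_right 0)"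
  proof (rule eventually_mono[OF ev])
    fix h assume h: "h \<in> {0<..<hmax}"
    have "\<bar>\<eta> u u - \<eta> (u - h) u\<bar> \<le> L * \<bar>u - (u - h)\<bar>"
      using h u b hmax by (intro L) auto
    then have "- (L * h) \<le> \<eta> u u - \<eta> (u - h) u" using h by auto
    then show "ereal (- L) \<le> ereal (Xq u h)" unfolding Xq_def using h by (simp add: field_simps)
  qed
  then have 1: "ereal (- L) \<le> AA u" unfolding AA_def by (rule Liminf_bounded)
  have "eventually (\<lambda>h. 0 \<le> ereal (Yq u h)) (at_right 0)"
  proof (rule eventually_mono[OF ev])
    fix h assume h: "h \<in> {0<..<hmax}"
    have "\<eta> u u \<le> \<eta> u (u + h)" using h u a b hmax by (intro monoD) auto
    then show "0 \<le> ereal (Yq u h)" unfolding Yq_def using h by simp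
  qed
  then have 2: "0 \<le> BB u" unfolding BB_def by (rule Liminf_bounded)
  have "ereal (- L) + 0 \<le> AA u + BB u" using 1 2 by (rule add_mono)
  then show ?thesis by simp
qed

lemma phi_case:
  assumes tf: "test_fun01 \<phi>" and pos: "\<forall>x. 0 \<le> \<phi> x"
  shows "enn2ereal (\<integral>\<^sup>+u. e2ennreal ((AA u + BB u) * ereal (\<phi> u)) \<partial>restrict_space lebesgue {0<..<1})
     \<le> ereal (- (LINT t:{0<..<1}|lebesgue. \<eta> t t * deriv \<phi> t))
       + enn2ereal (\<integral>\<^sup>+u. e2ennreal (- ((AA u + BB u) * ereal (\<phi> u))) \<partial>restrict_space lebesgue {0<..<1})"
proof -
  have d0: "\<And>x. (\<phi> has_real_derivative deriv \<phi> x) (at x)"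
    using tf unfolding test_fun01_def by (metis funpow_0 funpow_Suc_right id_apply comp_id funpow.simps(2) o_apply)
  have d1: "\<And>x. (deriv \<phi> has_real_derivative deriv (deriv \<phi>) x) (at x)"
  proof -
    fix x
    have "((deriv ^^ Suc 0) \<phi> has_real_derivative (deriv ^^ Suc (Suc 0)) \<phi> x) (at x)"
      using tf unfolding test_fun01_def by blast
    then show "(deriv \<phi> has_real_derivative deriv (deriv \<phi>) x) (at x)" by simp
  qed
  obtain a b0 where ab0: "0 < a" "a \<le> b0" "b0 < 1" and supp: "\<And>x. x \<notin> {a..b0} \<Longrightarrow> \<phi> x = 0"
    using tf unfolding test_fun01_def by blast
  define b where "b = (b0 + 1) / 2"
  have ab: "0 < a" "a < b" "b < 1" "b0 < b" using ab0 by (auto simp: b_def)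
  have supp': "\<And>x. x \<notin> {a..b} \<Longrightarrow> \<phi> x = 0" using supp ab by auto
  have dsupp: "deriv \<phi> x = 0" if "x \<notin> {a..b0}" for x
  proof (cases "x < a")
    case True
    show ?thesis
    proof (rule DERIV_local_const[OF d0])
      show "0 < a - x" using True by simp
      show "\<forall>y. \<bar>x - y\<bar> < a - x \<longrightarrow> \<phi> x = \<phi> y"
      proof (intro allI impI)
        fix y assume "\<bar>x - y\<bar> < a - x"
        then have "y < a" by (simp add: abs_less_iff)
        then show "\<phi> x = \<phi> y" using True supp[of x] supp[of y] by auto
      qed
    qed
  next
    case False
    then have "b0 < x" using that by auto
    show ?thesis
    proof (rule DERIV_local_const[OF d0])
      show "0 < x - b0" using \<open>b0 < x\<close> by simp
      show "\<forall>y. \<bar>x - y\<bar> < x - b0 \<longrightarrow> \<phi> x = \<phi> y"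
      proof (intro allI impI)
        fix y assume "\<bar>x - y\<bar> < x - b0"
        then have "b0 < y" by (simp add: abs_less_iff)
        then show "\<phi> x = \<phi> y" using \<open>b0 < x\<close> supp[of x] supp[of y] by auto
      qed
    qed
  qed
  have cphi: "continuous_on UNIV \<phi>"
    using d0 by (intro continuous_at_imp_continuous_on) (auto intro: DERIV_isCont)
  have cdphi: "continuous_on UNIV (deriv \<phi>)"
    using d1 by (intro continuous_at_imp_continuous_on) (auto intro: DERIV_isCont)
  have bnd01: "\<exists>B. \<forall>x\<in>{0..1}. \<bar>g x\<bar> \<le> B" if "continuous_on UNIV g" for g :: "real \<Rightarrow> real"
  proof -
    have "continuous_on {0..1} g" using that by (rule continuous_on_subset) auto
    then have "compact (g ` {0..1})" by (rule compact_continuous_image) simp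
    then have "bounded (g ` {0..1})" by (rule compact_imp_bounded)
    then obtain B where "\<forall>y\<in>g ` {0..1}. \<bar>y\<bar> \<le> B" unfolding bounded_real by blast
    then show ?thesis by auto
  qed
  obtain W0 where W0: "\<forall>x\<in>{0..1}. \<bar>\<phi> x\<bar> \<le> W0" using bnd01[OF cphi] by blast
  obtain M1 where M1: "\<forall>x\<in>{0..1}. \<bar>deriv \<phi> x\<bar> \<le> M1" using bnd01[OF cdphi] by blast
  have "continuous_on UNIV (deriv (deriv \<phi>))"
  proof -
    have "((deriv ^^ Suc (Suc 0)) \<phi> has_real_derivative (deriv ^^ Suc (Suc (Suc 0))) \<phi> x) (at x)" for x
      using tf unfolding test_fun01_def by blast
    then show ?thesis by (intro continuous_at_imp_continuous_on) (auto intro: DERIV_isCont)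
  qed
  then obtain M2 where M2: "\<forall>x\<in>{0..1}. \<bar>deriv (deriv \<phi>) x\<bar> \<le> M2" using bnd01 by blast
  have M1p: "0 \<le> M1" using M1 by force
  have M2p: "0 \<le> M2" using M2 by force
  have W0p: "0 \<le> W0" using W0 by force
  have W: "\<phi> x \<le> W0" for x
    using W0 W0p supp'[of x] ab by (cases "x \<in> {a..b}") (auto simp: abs_le_iff)
  obtain L where L: "L \<ge> 0"
    "\<And>s t t'. s \<in> {0..1} \<Longrightarrow> t \<in> {a/2..1} \<Longrightarrow> t' \<in> {a/2..1} \<Longrightarrow> \<bar>\<eta> t s - \<eta> t' s\<bar> \<le> L * \<bar>t - t'\<bar>"
    using lipE[of "a/2"] ab by auto
  obtain M where M: "M \<ge> 0" "\<And>t s. t \<in> {0..1} \<Longrightarrow> s \<in> {0..1} \<Longrightarrow> \<bar>\<eta> t s\<bar> \<le> M"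
    using bndE by blast
  define K where "K = - (LINT t:{0<..<1}|lebesgue. \<eta> t t * deriv \<phi> t)"
  define C where "C = L * M1 + M * M2"
  have Cp: "0 \<le> C" using L M M1p M2p by (simp add: C_def)
  define F where "F v = indicator {0<..<1} v * (\<eta> v v * deriv \<phi> v)" for v
  have Fm: "F \<in> borel_measurable lebesgue"
  proof -
    have "(\<lambda>t. \<eta> t t * deriv \<phi> t) \<in> borel_measurable (restrict_space lebesgue {0<..<1})"
      using meas_delta measurable_restrict_space1[OF borel_to_lebesgue[OF borel_measurable_continuous_onI[OF cdphi]]]
      by (rule borel_measurable_times)
    from restr01_to_global[OF this] show ?thesis unfolding F_def .
  qed
  have iF: "integrable lebesgue F"
  proof (rule integrableI_bounded_set[where A="{0<..<1}" and B="M * M1"])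
    show "AE x in lebesgue. x \<in> {0<..<1} \<longrightarrow> norm (F x) \<le> M * M1"
    proof (intro AE_I2 impI)
      fix x :: real assume x: "x \<in> {0<..<1}"
      have "\<bar>\<eta> x x\<bar> * \<bar>deriv \<phi> x\<bar> \<le> M * M1"
        using M M1 x by (intro mult_mono) auto
      then show "norm (F x) \<le> M * M1" using x by (simp add: F_def abs_mult)
    qed
  qed (use Fm in \<open>auto simp: F_def\<close>)
  have K_eq: "K = - integral\<^sup>L lebesgue F"
    unfolding K_def F_def set_lebesgue_integral_def by simp
  have bound: "\<exists>h0>0. \<forall>h. 0 < h \<longrightarrow> h < h0 \<longrightarrow>
         (\<exists>T. integrable lebesgue T \<and> (\<forall>v. \<eta> (v - h) v * (\<phi> (v - h) - \<phi> v) \<le> h * T v)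
              \<and> integral\<^sup>L lebesgue T \<le> K + e)" if e: "0 < e" for e
  proof -
    define h0 where "h0 = min (min (a/2) (1 - b)) (e / (C + 1))"
    have m1: "h0 \<le> min (a/2) (1 - b)" "h0 \<le> e / (C + 1)" unfolding h0_def
      by (rule min.cobounded1, rule min.cobounded2)
    have "h0 \<le> a/2" "h0 \<le> 1 - b" using m1(1) by (metis min.bounded_iff)+
    moreover have "0 < h0" unfolding h0_def using ab e Cp by auto
    ultimately have h0: "0 < h0" "h0 \<le> a/2" "h0 \<le> 1 - b" "h0 \<le> e / (C + 1)" using m1 by auto
    have "\<forall>h. 0 < h \<longrightarrow> h < h0 \<longrightarrow>
         (\<exists>T. integrable lebesgue T \<and> (\<forall>v. \<eta> (v - h) v * (\<phi> (v - h) - \<phi> v) \<le> h * T v)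
              \<and> integral\<^sup>L lebesgue T \<le> K + e)"
    proof (intro allI impI)
      fix h :: real assume h: "0 < h" "h < h0"
      define T where "T v = - F v + C * h * indicator {0<..<1} v" for v
      have iT: "integrable lebesgue T"
        unfolding T_def using iF by (intro Bochner_Integration.integrable_add integrable_mult_right) auto
      have intT: "integral\<^sup>L lebesgue T = K + C * h"
      proof -
        have "integral\<^sup>L lebesgue T = - integral\<^sup>L lebesgue F + C * h * measure lebesgue {0<..<1::real}"
          unfolding T_def using iF by (simp add: Bochner_Integration.integral_add)
        then show ?thesis using K_eq by simp
      qed
      have "C * h \<le> C * (e / (C + 1))" using h h0 Cp by (intro mult_left_mono) auto
      also have "\<dots> < e" using Cp e by (simp add: field_simps)
      finally have Ch: "C * h < e" .
      have pt: "\<eta> (v - h) v * (\<phi> (v - h) - \<phi> v) \<le> h * T v" for v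
      proof -
        consider (out) "v \<notin> {0<..<1}" | (lo) "v \<in> {0<..<1}" "v < a" | (hi) "v \<in> {0<..<1}" "b0 < v - h"
          | (mid) "v \<in> {0<..<1}" "a \<le> v" "v - h \<le> b0" by fastforce
        then show ?thesis
        proof cases
          case out
          then have "v \<le> 0 \<or> 1 \<le> v" by auto
          then have "\<phi> (v - h) = 0 \<and> \<phi> v = 0"
          proof
            assume "v \<le> 0" then show ?thesis using supp ab h by auto
          next
            assume "1 \<le> v" then show ?thesis using supp ab h h0 by auto
          qed
          then show ?thesis using out by (simp add: T_def F_def)
        next
          case lo
          then have "\<phi> (v - h) = 0" "\<phi> v = 0" "deriv \<phi> v = 0" using supp dsupp h by auto
          then show ?thesis using lo h Cp by (simp add: T_def F_def)
        next
          case hi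
          then have "\<phi> (v - h) = 0" "\<phi> v = 0" "deriv \<phi> v = 0" using supp dsupp h by auto
          then show ?thesis using hi h Cp by (simp add: T_def F_def)
        next
          case mid
          have vh: "v - h \<in> {a/2..1}" "v \<in> {a/2..1}" "v - h < v" using mid h h0 ab by auto
          define D where "D = \<phi> (v - h) - \<phi> v"
          obtain z where z: "v - h < z" "z < v" "\<phi> v - \<phi> (v - h) = (v - (v - h)) * deriv \<phi> z"
            using MVT2[of "v - h" v \<phi> "deriv \<phi>"] vh d0 by blast
          have z01: "z \<in> {0..1}" using z vh ab by auto
          obtain y where y: "z < y" "y < v" "deriv \<phi> v - deriv \<phi> z = (v - z) * deriv (deriv \<phi>) y"
            using MVT2[of z v "deriv \<phi>" "deriv (deriv \<phi>)"] z d1 by blast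
          have y01: "y \<in> {0..1}" using y z vh ab by auto
          have D_eq: "D = - h * deriv \<phi> z" using z by (simp add: D_def algebra_simps)
          have bD: "\<bar>D\<bar> \<le> M1 * h"
            using M1 z01 h unfolding D_eq by (simp add: abs_mult mult.commute mult_right_mono)
          have "\<bar>deriv \<phi> v - deriv \<phi> z\<bar> \<le> M2 * h"
          proof -
            have "\<bar>deriv \<phi> v - deriv \<phi> z\<bar> = (v - z) * \<bar>deriv (deriv \<phi>) y\<bar>"
              using y z by (simp add: abs_mult)
            also have "\<dots> \<le> h * M2" using M2 y01 z by (intro mult_mono) auto
            finally show ?thesis by (simp add: mult.commute)
          qed
          note b2 = this
          have e2: "D + h * deriv \<phi> v = h * (deriv \<phi> v - deriv \<phi> z)" unfolding D_eq by (simp add: algebra_simps)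
          have "\<bar>D + h * deriv \<phi> v\<bar> = h * \<bar>deriv \<phi> v - deriv \<phi> z\<bar>"
            unfolding e2 using h by (simp add: abs_mult)
          also have "\<dots> \<le> h * (M2 * h)" using b2 h by (intro mult_left_mono) auto
          also have "\<dots> = M2 * h * h" by (simp add: mult_ac)
          finally have bD2: "\<bar>D + h * deriv \<phi> v\<bar> \<le> M2 * h * h" .
          have bE: "\<bar>\<eta> (v - h) v - \<eta> v v\<bar> \<le> L * h"
            using L(2)[of v "v - h" v] vh h mid by auto
          have t1: "\<bar>(\<eta> (v - h) v - \<eta> v v) * D\<bar> \<le> (L * h) * (M1 * h)"
            unfolding abs_mult using bE bD by (intro mult_mono) auto
          have t2: "\<bar>\<eta> v v * (D + h * deriv \<phi> v)\<bar> \<le> M * (M2 * h * h)"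
            unfolding abs_mult using M(1) M(2)[of v v] mid bD2 by (intro mult_mono) auto
          have split: "\<eta> (v - h) v * D = h * (- (\<eta> v v * deriv \<phi> v)) + \<eta> v v * (D + h * deriv \<phi> v)
              + (\<eta> (v - h) v - \<eta> v v) * D"
            by (simp add: algebra_simps)
          have "\<eta> (v - h) v * D \<le> h * (- (\<eta> v v * deriv \<phi> v)) + M * (M2 * h * h) + (L * h) * (M1 * h)"
            using t1 t2 unfolding split by (simp add: abs_le_iff)
          also have "\<dots> = h * (- (\<eta> v v * deriv \<phi> v) + C * h)"
            by (simp add: C_def algebra_simps)
          also have "\<dots> = h * T v" using mid by (simp add: T_def F_def)
          finally show ?thesis unfolding D_def .
        qed
      qed
      show "\<exists>T. integrable lebesgue T \<and> (\<forall>v. \<eta> (v - h) v * (\<phi> (v - h) - \<phi> v) \<le> h * T v)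
              \<and> integral\<^sup>L lebesgue T \<le> K + e"
        using iT pt intT Ch by (intro exI[of _ T]) auto
    qed
    then show ?thesis using h0(1) by blast
  qed
  have wm: "\<phi> \<in> borel_measurable borel" using cphi by (rule borel_measurable_continuous_onI)
  have core_res:
    "(\<integral>\<^sup>+u. e2ennreal ((AA u + BB u + ereal L) * ereal (\<phi> u)) \<partial>lebesgue) \<le> ennreal (K + L * integral\<^sup>L lebesgue \<phi>)"
    "0 \<le> K + L * integral\<^sup>L lebesgue \<phi>"
    using core[OF ab(1-3) wm _ W supp' L bound] pos by auto
  have iw: "integrable lebesgue \<phi>"
  proof (rule integrableI_bounded_set[where A="{a..b}" and B=W0])
    show "AE x in lebesgue. x \<in> {a..b} \<longrightarrow> norm (\<phi> x) \<le> W0"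
      using W0 ab by (intro AE_I2) auto
    show "AE x in lebesgue. x \<notin> {a..b} \<longrightarrow> \<phi> x = 0"
      using supp' by (intro AE_I2) auto
  qed (use borel_to_lebesgue[OF wm] ab in auto)
  have "enn2ereal (\<integral>\<^sup>+u. e2ennreal ((AA u + BB u) * ereal (\<phi> u)) \<partial>restrict_space lebesgue {0<..<1})
     \<le> ereal K + enn2ereal (\<integral>\<^sup>+u. e2ennreal (- ((AA u + BB u) * ereal (\<phi> u))) \<partial>restrict_space lebesgue {0<..<1})"
  proof (rule decomp[OF wm _ _ iw L(1) _ core_res])
    show "0 \<le> \<phi> u" for u using pos by auto
    show "\<phi> u = 0" if "u \<notin> {0<..<1}" for u using that supp' ab by auto
    show "- ereal L \<le> AA u + BB u" if "0 < \<phi> u" for u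
    proof -
      have "u \<in> {a..b}" using that supp'[of u] by auto
      then show ?thesis using ab L(2) by (intro AB_lower[of a u b L]) auto
    qed
  qed
  then show ?thesis unfolding K_def .
qed

end


context diag begin

lemma ind_case:
  fixes a b e0 L' :: real
  assumes ab: "0 < a" "a \<le> 1/4" "3/4 \<le> b" "b < 1"
    and cont0: "\<And>t. t \<in> {0..a} \<Longrightarrow> \<eta> 0 0 - e0 \<le> \<eta> t 0"
    and L': "L' \<ge> 0" "\<And>s t t'. s \<in> {0..1} \<Longrightarrow> t \<in> {1/2..1} \<Longrightarrow> t' \<in> {1/2..1} \<Longrightarrow> \<bar>\<eta> t s - \<eta> t' s\<bar> \<le> L' * \<bar>t - t'\<bar>"
  shows "enn2ereal (\<integral>\<^sup>+u. e2ennreal ((AA u + BB u) * ereal (indicator {a<..b} u)) \<partial>restrict_space lebesgue {0<..<1})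
     \<le> ereal (\<eta> 1 1 - \<eta> 0 0 + L' * (1 - b) + e0)
       + enn2ereal (\<integral>\<^sup>+u. e2ennreal (- ((AA u + BB u) * ereal (indicator {a<..b} u))) \<partial>restrict_space lebesgue {0<..<1})"
proof -
  define w :: "real \<Rightarrow> real" where "w = indicator {a<..b}"
  have ab': "a < b" using ab by simp
  obtain L where L: "L \<ge> 0"
    "\<And>s t t'. s \<in> {0..1} \<Longrightarrow> t \<in> {a/2..1} \<Longrightarrow> t' \<in> {a/2..1} \<Longrightarrow> \<bar>\<eta> t s - \<eta> t' s\<bar> \<le> L * \<bar>t - t'\<bar>"
    using lipE[of "a/2"] ab by auto
  define K where "K = \<eta> 1 1 - \<eta> 0 0 + L' * (1 - b) + e0"
  have wm: "w \<in> borel_measurable borel" unfolding w_def by simp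
  have w0: "0 \<le> w u" for u by (simp add: w_def)
  have wW: "w u \<le> 1" for u by (simp add: w_def indicator_def)
  have wsupp: "w u = 0" if "u \<notin> {a..b}" for u using that by (auto simp: w_def)
  have bound: "\<exists>h0>0. \<forall>h. 0 < h \<longrightarrow> h < h0 \<longrightarrow>
         (\<exists>T. integrable lebesgue T \<and> (\<forall>v. \<eta> (v - h) v * (w (v - h) - w v) \<le> h * T v)
              \<and> integral\<^sup>L lebesgue T \<le> K + e)" if e: "0 < e" for e
  proof -
    define h0 where "h0 = min (min (a/2) (1 - b)) (min (b - a) (e / (L' + 1)))"
    have m1: "h0 \<le> min (a/2) (1 - b)" "h0 \<le> min (b - a) (e / (L' + 1))" unfolding h0_def
      by (rule min.cobounded1, rule min.cobounded2)
    have h0': "h0 \<le> a/2" "h0 \<le> 1 - b" "h0 \<le> b - a" "h0 \<le> e / (L' + 1)"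
      using m1 by (metis min.bounded_iff)+
    then have h0: "h0 \<le> a/2" "h0 \<le> 1/4" "h0 \<le> b - a" "h0 \<le> e / (L' + 1)" "h0 \<le> 1 - b"
      using ab by auto
    have h0p: "0 < h0" unfolding h0_def using ab e L' by auto
    have "\<forall>h. 0 < h \<longrightarrow> h < h0 \<longrightarrow>
         (\<exists>T. integrable lebesgue T \<and> (\<forall>v. \<eta> (v - h) v * (w (v - h) - w v) \<le> h * T v)
              \<and> integral\<^sup>L lebesgue T \<le> K + e)"
    proof (intro allI impI)
      fix h :: real assume h: "0 < h" "h < h0"
      define K1 where "K1 = \<eta> 1 1 + L' * (1 - b + h)"
      define K0 where "K0 = \<eta> 0 0 - e0"
      define T where "T v = (K1 * indicator {b<..b+h} v - K0 * indicator {a<..a+h} v) / h" for v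
      have iT: "integrable lebesgue T"
        unfolding T_def using h by (intro integrable_divide Bochner_Integration.integrable_diff integrable_mult_right integrable_real_indicator) auto
      have intT: "integral\<^sup>L lebesgue T = K1 - K0"
      proof -
        have "integral\<^sup>L lebesgue T = (K1 * h - K0 * h) / h"
          unfolding T_def using h
          by (subst integral_divide_zero, subst Bochner_Integration.integral_diff) auto
        moreover have "(K1 * h - K0 * h) / h = K1 - K0" using h by (simp add: field_simps)
        ultimately show ?thesis by simp
      qed
      have "L' * h \<le> L' * (e / (L' + 1))" using h h0 L' by (intro mult_left_mono) auto
      also have "\<dots> < e" using L' e by (simp add: field_simps)
      finally have Lh: "L' * h < e" .
      have Tle: "integral\<^sup>L lebesgue T \<le> K + e"
        unfolding intT K1_def K0_def K_def using Lh by (simp add: algebra_simps)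
      have pt: "\<eta> (v - h) v * (w (v - h) - w v) \<le> h * T v" for v
      proof -
        have hT: "h * T v = K1 * indicator {b<..b+h} v - K0 * indicator {a<..a+h} v"
          unfolding T_def using h by simp
        consider (top) "v \<in> {b<..b+h}" | (bot) "v \<in> {a<..a+h}" | (other) "v \<notin> {b<..b+h}" "v \<notin> {a<..a+h}"
          by blast
        then show ?thesis
        proof cases
          case top
          then have nb: "v \<notin> {a<..a+h}" using h h0 by auto
          have ww: "w (v - h) = 1" "w v = 0" using top h h0 by (auto simp: w_def)
          have v1: "v - h \<in> {1/2..1}" "v \<le> 1" using top h h0 ab by auto
          have "\<eta> (v - h) v \<le> \<eta> (v - h) 1" using v1 top ab by (intro monoD) auto
          also have "\<eta> (v - h) 1 \<le> \<eta> 1 1 + L' * \<bar>(v - h) - 1\<bar>"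
            using L'(2)[of 1 "v - h" 1] v1 by auto
          also have "\<bar>(v - h) - 1\<bar> = 1 - (v - h)" using v1 by auto
          also have "L' * (1 - (v - h)) \<le> L' * (1 - b + h)" using top L' by (intro mult_left_mono) auto
          finally have "\<eta> (v - h) v \<le> K1" unfolding K1_def by simp
          then show ?thesis using ww top nb hT by simp
        next
          case bot
          then have nt: "v \<notin> {b<..b+h}" using h h0 by auto
          have ww: "w (v - h) = 0" "w v = 1" using bot h h0 by (auto simp: w_def)
          have v0: "v - h \<in> {0..a}" "0 \<le> v" "v \<le> 1" using bot h h0 ab by auto
          have "\<eta> 0 0 - e0 \<le> \<eta> (v - h) 0" using cont0 v0 by auto
          also have "\<eta> (v - h) 0 \<le> \<eta> (v - h) v" using v0 ab by (intro monoD) auto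
          finally have "K0 \<le> \<eta> (v - h) v" unfolding K0_def .
          then show ?thesis using ww bot nt hT by simp
        next
          case other
          have "w (v - h) = w v" using other h h0 by (auto simp: w_def indicator_def)
          then have "\<eta> (v - h) v * (w (v - h) - w v) = 0" by simp
          moreover have "h * T v = 0" using hT other by simp
          ultimately show ?thesis by linarith
        qed
      qed
      show "\<exists>T. integrable lebesgue T \<and> (\<forall>v. \<eta> (v - h) v * (w (v - h) - w v) \<le> h * T v)
              \<and> integral\<^sup>L lebesgue T \<le> K + e"
        using iT pt Tle by blast
    qed
    then show ?thesis using h0p by blast
  qed
  have ab2: "0 < a" "a < b" "b < 1" using ab by auto
  have core_res:
    "(\<integral>\<^sup>+u. e2ennreal ((AA u + BB u + ereal L) * ereal (w u)) \<partial>lebesgue) \<le> ennreal (K + L * integral\<^sup>L lebesgue w)"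
    "0 \<le> K + L * integral\<^sup>L lebesgue w"
    using core[OF ab2 wm w0 wW wsupp L bound] by auto
  have iw: "integrable lebesgue w" unfolding w_def using ab2 by (intro integrable_real_indicator) auto
  have "enn2ereal (\<integral>\<^sup>+u. e2ennreal ((AA u + BB u) * ereal (w u)) \<partial>restrict_space lebesgue {0<..<1})
     \<le> ereal K + enn2ereal (\<integral>\<^sup>+u. e2ennreal (- ((AA u + BB u) * ereal (w u))) \<partial>restrict_space lebesgue {0<..<1})"
  proof (rule decomp[OF wm w0 _ iw L(1) _ core_res])
    show "w u = 0" if "u \<notin> {0<..<1}" for u using that ab by (auto simp: w_def)
    show "- ereal L \<le> AA u + BB u" if "0 < w u" for u
    proof -
      have "u \<in> {a..b}" using that wsupp[of u] by auto
      then show ?thesis using ab2 L(2) by (intro AB_lower[of a u b L]) auto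
    qed
  qed
  then show ?thesis unfolding K_def w_def .
qed

end


context diag begin

lemma final_claim:
  "enn2ereal (\<integral>\<^sup>+u. e2ennreal (AA u + BB u) \<partial>restrict_space lebesgue {0<..<1})
     \<le> ereal (\<eta> 1 1 - \<eta> 0 0) + enn2ereal (\<integral>\<^sup>+u. e2ennreal (- (AA u + BB u)) \<partial>restrict_space lebesgue {0<..<1})"
proof -
  let ?M = "restrict_space lebesgue {0<..<1::real}"
  define ak where "ak k = 1 / (real k + 4)" for k :: nat
  define bk where "bk k = 1 - ak k" for k
  define f where "f k u = e2ennreal ((AA u + BB u) * ereal (indicator {ak k<..bk k} u))" for k u
  define Pk where "Pk k = (\<integral>\<^sup>+u. f k u \<partial>?M)" for k
  define Nk where "Nk k = (\<integral>\<^sup>+u. e2ennreal (- ((AA u + BB u) * ereal (indicator {ak k<..bk k} u))) \<partial>?M)" for k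
  define Pos where "Pos = (\<integral>\<^sup>+u. e2ennreal (AA u + BB u) \<partial>?M)"
  define Neg where "Neg = (\<integral>\<^sup>+u. e2ennreal (- (AA u + BB u)) \<partial>?M)"
  have ak: "0 < ak k" "ak k \<le> 1/4" for k by (auto simp: ak_def field_simps)
  have bk: "3/4 \<le> bk k" "bk k < 1" for k using ak[of k] by (auto simp: bk_def)
  have ak_mono: "ak k' \<le> ak k" if "k \<le> k'" for k k' using that by (simp add: ak_def frac_le)
  have bk_mono: "bk k \<le> bk k'" if "k \<le> k'" for k k' using ak_mono[OF that] by (simp add: bk_def)
  have f_le: "f k u \<le> e2ennreal (AA u + BB u)" for k u
    by (auto simp: f_def indicator_def zero_ereal_def[symmetric] e2ennreal_neg)
  have f_inc: "incseq f"
  proof (rule incseq_SucI, rule le_funI)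
    fix k u
    have "{ak k<..bk k} \<subseteq> {ak (Suc k)<..bk (Suc k)}"
      using ak_mono[of k "Suc k"] bk_mono[of k "Suc k"] by auto
    then show "f k u \<le> f (Suc k) u"
      by (auto simp: f_def indicator_def zero_ereal_def[symmetric] e2ennreal_neg)
  qed
  have Pk_mono: "Pk k \<le> Pk k'" if "k \<le> k'" for k k'
    unfolding Pk_def using f_inc that by (intro nn_integral_mono) (auto simp: incseq_def le_fun_def)
  have rm: "(\<lambda>u. AA u + BB u) \<in> borel_measurable ?M" by (rule meas_r)
  have fm: "f k \<in> borel_measurable ?M" for k
  proof -
    have "(indicator {ak k<..bk k} :: real \<Rightarrow> real) \<in> borel_measurable borel" by simp
    then have "(\<lambda>u. ereal (indicator {ak k<..bk k} u)) \<in> borel_measurable ?M"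
      by (intro borel_measurable_ereal measurable_restrict_space1 borel_to_lebesgue)
    then show ?thesis unfolding f_def
      using borel_measurable_ereal_times[OF rm] by (metis measurable_compose measurable_e2ennreal)
  qed
  have sup: "(SUP k. f k u) = e2ennreal (AA u + BB u)" if u01: "u \<in> {0<..<1}" for u
  proof (rule antisym)
    show "(SUP k. f k u) \<le> e2ennreal (AA u + BB u)" by (rule SUP_least) (rule f_le)
    obtain n :: nat where n: "n > 0" "inverse (real n) < min u (1-u)"
      using ex_inverse_of_nat_less[of "min u (1-u)"] u01 by auto
    have "ak n \<le> inverse (real n)" using n by (simp add: ak_def field_simps)
    then have "u \<in> {ak n<..bk n}" using n by (auto simp: bk_def)
    then have "f n u = e2ennreal (AA u + BB u)" by (simp add: f_def)
    then show "e2ennreal (AA u + BB u) \<le> (SUP k. f k u)" by (metis SUP_upper UNIV_I)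
  qed
  have Pos_eq: "Pos = (SUP k. Pk k)"
  proof -
    have "Pos = (\<integral>\<^sup>+u. (SUP k. f k u) \<partial>?M)"
      unfolding Pos_def by (intro nn_integral_cong) (simp add: sup)
    also have "\<dots> = (SUP k. Pk k)"
      unfolding Pk_def by (rule nn_integral_monotone_convergence_SUP[OF f_inc fm])
    finally show ?thesis .
  qed
  have Nk_le: "Nk k \<le> Neg" for k
    unfolding Nk_def Neg_def
    by (intro nn_integral_mono) (auto simp: indicator_def zero_ereal_def[symmetric] e2ennreal_neg)
  obtain L' where L': "L' \<ge> 0"
    "\<And>s t t'. s \<in> {0..1} \<Longrightarrow> t \<in> {1/2..1} \<Longrightarrow> t' \<in> {1/2..1} \<Longrightarrow> \<bar>\<eta> t s - \<eta> t' s\<bar> \<le> L' * \<bar>t - t'\<bar>"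
    using lipE[of "1/2"] by auto
  show ?thesis
  proof (cases "Neg = top")
    case True
    then show ?thesis unfolding Neg_def by simp
  next
    case False
    then obtain n0 where n0: "Neg = ennreal n0" "0 \<le> n0" by (cases Neg rule: ennreal_cases) auto
    have main: "enn2ereal Pos \<le> ereal (\<eta> 1 1 - \<eta> 0 0 + n0) + ereal (2 * e)" if e: "0 < e" for e
    proof -
      have "continuous_on {0..1} (\<lambda>t. \<eta> t 0)" using cont by auto
      then obtain d where d: "d > 0" "\<And>t. t \<in> {0..1} \<Longrightarrow> dist t 0 < d \<Longrightarrow> dist (\<eta> t 0) (\<eta> 0 0) < e"
        unfolding continuous_on_iff using e by (metis atLeastAtMost_iff order_refl zero_le_one)
      obtain k0 :: nat where k0: "k0 > 0" "inverse (real k0) < min d (e / (L' + 1))"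
        using ex_inverse_of_nat_less[of "min d (e / (L' + 1))"] d e L' by auto
      have ak0: "ak k0 < min d (e / (L' + 1))"
        using k0 by (smt (verit) ak_def divide_inverse frac_le inverse_eq_divide of_nat_0_less_iff mult_1)
      define c where "c = \<eta> 1 1 - \<eta> 0 0 + 2 * e + n0"
      have Pk_bound: "Pk k \<le> ennreal c" and c0: "0 \<le> c" if "k0 \<le> k" for k
      proof -
        have akd: "ak k < d" "ak k < e / (L' + 1)" using ak0 ak_mono[OF that] by auto
        have cont0: "\<eta> 0 0 - e \<le> \<eta> t 0" if "t \<in> {0..ak k}" for t
        proof -
          have "t \<in> {0..1}" "dist t 0 < d" using that akd ak[of k] by (auto simp: dist_real_def)
          then have "dist (\<eta> t 0) (\<eta> 0 0) < e" by (rule d(2))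
          then show ?thesis by (simp add: dist_real_def)
        qed
        have "enn2ereal (Pk k) \<le> ereal (\<eta> 1 1 - \<eta> 0 0 + L' * (1 - bk k) + e) + enn2ereal (Nk k)"
          unfolding Pk_def Nk_def f_def
          using ind_case[OF ak(1)[of k] ak(2)[of k] bk(1)[of k] bk(2)[of k] cont0 L'] by simp
        moreover have "L' * (1 - bk k) \<le> e"
        proof -
          have "L' * (1 - bk k) = L' * ak k" by (simp add: bk_def)
          also have "\<dots> \<le> L' * (e / (L' + 1))" using akd L' by (intro mult_left_mono) auto
          also have "\<dots> \<le> e" using L' e by (simp add: field_simps)
          finally show ?thesis .
        qed
        moreover have "enn2ereal (Nk k) \<le> ereal n0"
          using Nk_le[of k] n0 by (metis enn2ereal_ennreal less_eq_ennreal.rep_eq)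
        ultimately have le: "enn2ereal (Pk k) \<le> ereal c"
          unfolding c_def by (smt (verit) add_mono ereal_less_eq(3) order.trans plus_ereal.simps(1))
        then show "0 \<le> c" using enn2ereal_nonneg[of "Pk k"] by (metis ereal_less_eq(5) order.trans)
        show "Pk k \<le> ennreal c"
          using le by (metis e2ennreal_enn2ereal e2ennreal_ereal e2ennreal_mono)
      qed
      have "Pos \<le> ennreal c"
        unfolding Pos_eq
      proof (rule SUP_least)
        fix k
        have "Pk k \<le> Pk (max k k0)" by (rule Pk_mono) simp
        also have "\<dots> \<le> ennreal c" by (rule Pk_bound) simp
        finally show "Pk k \<le> ennreal c" .
      qed
      then have "enn2ereal Pos \<le> ereal c"
        using c0[of k0] by (metis enn2ereal_ennreal less_eq_ennreal.rep_eq order_refl)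
      then show ?thesis unfolding c_def by (simp add: algebra_simps)
    qed
    have "enn2ereal Pos \<le> ereal (\<eta> 1 1 - \<eta> 0 0 + n0)"
    proof (rule ereal_le_epsilon2)
      fix e :: real assume "0 < e"
      then show "enn2ereal Pos \<le> ereal (\<eta> 1 1 - \<eta> 0 0 + n0) + ereal e"
        using main[of "e/2"] by simp
    qed
    then show ?thesis using n0 unfolding Pos_def[symmetric] Neg_def[symmetric] by simp
  qed
qed

end

theorem lemma3p14:
  fixes \<eta> :: "real \<Rightarrow> real \<Rightarrow> real" and r :: "real \<Rightarrow> ereal" and \<delta> :: "real \<Rightarrow> real"
  assumes cont: "\<forall>s\<in>{0..1}. continuous_on {0..1} (\<lambda>t. \<eta> t s)"
    and lip: "\<forall>\<epsilon>>0. \<exists>L. \<forall>s\<in>{0..1}. L-lipschitz_on {\<epsilon>..1} (\<lambda>t. \<eta> t s)"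
    and mono: "\<forall>t\<in>{0..1}. mono_on {0..1} (\<lambda>s. \<eta> t s)"
    and r_def: "\<And>t. r t = Liminf (at_right 0) (\<lambda>h. ereal ((\<eta> t t - \<eta> (t - h) t) / h))
                         + Liminf (at_right 0) (\<lambda>h. ereal ((\<eta> t (t + h) - \<eta> t t) / h))"
    and \<delta>_def: "\<And>t. \<delta> t = \<eta> t t"
  shows "set_integrable lebesgue {0<..<1} \<delta>
    \<and> r \<in> borel_measurable (restrict_space lebesgue {0<..<1})
    \<and> (\<forall>\<phi>. test_fun01 \<phi> \<and> (\<forall>x. 0 \<le> \<phi> x) \<longrightarrow>
          ext_integral_le {0<..<1} (\<lambda>t. r t * ereal (\<phi> t))
            (- (LINT t:{0<..<1}|lebesgue. \<delta> t * deriv \<phi> t)))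
    \<and> ext_integral_le {0<..<1} r (\<delta> 1 - \<delta> 0)"
proof -
  interpret diag \<eta> by (rule diag.intro[OF cont lip mono])
  have rr: "r = (\<lambda>t. AA t + BB t)"
    by (rule ext) (simp add: r_def AA_def BB_def Xq_def Yq_def)
  have dd: "\<delta> = (\<lambda>t. \<eta> t t)"
    by (rule ext) (simp add: \<delta>_def)
  have sets01: "{0<..<1::real} \<inter> space lebesgue \<in> sets lebesgue" by simp
  have pos_eq: "pos_int {0<..<1} f = (\<integral>\<^sup>+x. e2ennreal (f x) \<partial>restrict_space lebesgue {0<..<1})" for f
    unfolding pos_int_def by (simp add: nn_integral_restrict_space[OF sets01])
  have neg_eq: "neg_int {0<..<1} f = (\<integral>\<^sup>+x. e2ennreal (- f x) \<partial>restrict_space lebesgue {0<..<1})" for f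
    unfolding neg_int_def by (simp add: nn_integral_restrict_space[OF sets01])
  have P1: "set_integrable lebesgue {0<..<1} \<delta>" unfolding dd by (rule int_delta)
  have P2: "r \<in> borel_measurable (restrict_space lebesgue {0<..<1})" unfolding rr by (rule meas_r)
  have P3: "ext_integral_le {0<..<1} (\<lambda>t. r t * ereal (\<phi> t))
            (- (LINT t:{0<..<1}|lebesgue. \<delta> t * deriv \<phi> t))"
    if "test_fun01 \<phi> \<and> (\<forall>x. 0 \<le> \<phi> x)" for \<phi>
    unfolding ext_integral_le_def pos_eq neg_eq rr dd
    using phi_case[of \<phi>] that by simp
  have P4: "ext_integral_le {0<..<1} r (\<delta> 1 - \<delta> 0)"
    unfolding ext_integral_le_def pos_eq neg_eq rr dd
    using final_claim by simp
  show ?thesis using P1 P2 P3 P4 by blast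
qed

end
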